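(* Let $F$ be a field of characteristic $2$. Every separated symplectic quadratic space $(V,q,q')$ over $F$ decomposes as $(V,q,q')\simeq\varphi_{an}\perp\mu_1\perp\dots\perp\mu_n$ ($n\ge0$), where $\varphi_{an}$ is an anisotropic separated symplectic quadratic space which is uniquely determined up to isometry, and each $\mu_i$ is a one-dimensional metabolic separated symplectic quadratic space. Moreover, if $(V,q,q')$ is metabolic then $\varphi_{an}=0$.
   Context: A separated symplectic quadratic space over $F$ is a triple $(V,q,q')$ with $V$ a finite-dimensional $F$-vector space, $q$ a totally singular quadratic form on $V$ and $q'$ a totally singular quadratic form on $V^*$ (totally singular: $Q(\lambda x)=\lambda^2Q(x)$ and $Q(x+y)=Q(x)+Q(y)$). Isometry: a linear isomorphism $L\colon V_1\to V_2$ with $q_2\circ L=q_1$ and $q_1'\circ L^*=q_2'$. Orthogonal sum: $(V_1\oplus V_2,q_1\perp q_2,q_1'\perp q_2')$ with $(V_1\oplus V_2)^*=V_1^*\oplus V_2^*$. The space is isotropic if $q$ or $q'$ has a nonzero zero, anisotropic otherwise. It is metabolic if there is a subspace $U\subset V$ (any dimension) with $q(U)=0$ and $q'(U^o)=0$, where $U^o\subset V^*$ is the annihilator of $U$. $0$ denotes the space with $V=0$. *)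

theory Defs
  imports Main
begin

text \<open>Coordinate model: a finite-dimensional F-vector space of dimension n is F^n,
represented as functions nat => F vanishing from index n on. The dual space
(F^n)* is identified with F^n via the standard pairing.\<close>

type_synonym 'a vec = "nat \<Rightarrow> 'a"

text \<open>A separated symplectic quadratic space: (dimension, q on V, q' on V*).\<close>
type_synonym 'a ssqs = "nat \<times> ('a vec \<Rightarrow> 'a) \<times> ('a vec \<Rightarrow> 'a)"

definition vecs :: "nat \<Rightarrow> 'a::zero vec set" where
  "vecs n = {x. \<forall>i\<ge>n. x i = 0}"

definition smul :: "'a::times \<Rightarrow> 'a vec \<Rightarrow> 'a vec" where
  "smul c x = (\<lambda>i. c * x i)"

definition vadd :: "'a::plus vec \<Rightarrow> 'a vec \<Rightarrow> 'a vec" where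
  "vadd x y = (\<lambda>i. x i + y i)"

definition zvec :: "'a::zero vec" where
  "zvec = (\<lambda>_. 0)"

definition pairing :: "nat \<Rightarrow> 'a::comm_semiring_1 vec \<Rightarrow> 'a vec \<Rightarrow> 'a" where
  "pairing n f x = (\<Sum>i<n. f i * x i)"

definition unit_vec :: "nat \<Rightarrow> 'a::{zero,one} vec" where
  "unit_vec j = (\<lambda>i. if i = j then 1 else 0)"

definition totally_singular :: "nat \<Rightarrow> ('a::field vec \<Rightarrow> 'a) \<Rightarrow> bool" where
  "totally_singular n Q \<longleftrightarrow>
     (\<forall>c. \<forall>x\<in>vecs n. Q (smul c x) = c ^ 2 * Q x) \<and>
     (\<forall>x\<in>vecs n. \<forall>y\<in>vecs n. Q (vadd x y) = Q x + Q y)"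

definition is_ssqs :: "'a::field ssqs \<Rightarrow> bool" where
  "is_ssqs S = (case S of (n, q, q') \<Rightarrow> totally_singular n q \<and> totally_singular n q')"

definition dim :: "'a ssqs \<Rightarrow> nat" where
  "dim S = fst S"

definition linear_on :: "nat \<Rightarrow> ('a::field vec \<Rightarrow> 'a vec) \<Rightarrow> bool" where
  "linear_on n L \<longleftrightarrow>
     (\<forall>x\<in>vecs n. \<forall>y\<in>vecs n. L (vadd x y) = vadd (L x) (L y)) \<and>
     (\<forall>c. \<forall>x\<in>vecs n. L (smul c x) = smul c (L x))"

text \<open>Dual (transpose) map L^*: V2^* \<rightarrow> V1^*, g \<mapsto> g \<circ> L, in dual coordinates.\<close>
definition dual_map :: "nat \<Rightarrow> nat \<Rightarrow> ('a::field vec \<Rightarrow> 'a vec) \<Rightarrow> 'a vec \<Rightarrow> 'a vec" where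
  "dual_map n1 n2 L g = (\<lambda>j. if j < n1 then pairing n2 g (L (unit_vec j)) else 0)"

definition isometric :: "'a::field ssqs \<Rightarrow> 'a ssqs \<Rightarrow> bool" where
  "isometric S1 S2 = (case S1 of (n1, q1, q1') \<Rightarrow> case S2 of (n2, q2, q2') \<Rightarrow>
     (\<exists>L. linear_on n1 L \<and> bij_betw L (vecs n1) (vecs n2) \<and>
          (\<forall>x\<in>vecs n1. q2 (L x) = q1 x) \<and>
          (\<forall>g\<in>vecs n2. q1' (dual_map n1 n2 L g) = q2' g)))"

text \<open>Orthogonal sum: coordinates of V1 come first, then those of V2 (shifted).\<close>
definition first_part :: "nat \<Rightarrow> 'a::zero vec \<Rightarrow> 'a vec" where
  "first_part n1 x = (\<lambda>i. if i < n1 then x i else 0)"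

definition second_part :: "nat \<Rightarrow> 'a vec \<Rightarrow> 'a vec" where
  "second_part n1 x = (\<lambda>i. x (i + n1))"

definition orth_sum :: "'a::field ssqs \<Rightarrow> 'a ssqs \<Rightarrow> 'a ssqs" where
  "orth_sum S1 S2 = (case S1 of (n1, q1, q1') \<Rightarrow> case S2 of (n2, q2, q2') \<Rightarrow>
     (n1 + n2,
      \<lambda>x. q1 (first_part n1 x) + q2 (second_part n1 x),
      \<lambda>f. q1' (first_part n1 f) + q2' (second_part n1 f)))"

definition orth_sum_list :: "'a::field ssqs \<Rightarrow> 'a ssqs list \<Rightarrow> 'a ssqs" where
  "orth_sum_list S ms = foldl orth_sum S ms"

definition zero_space :: "'a::field ssqs" where
  "zero_space = (0, \<lambda>_. 0, \<lambda>_. 0)"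

definition isotropic :: "'a::field ssqs \<Rightarrow> bool" where
  "isotropic S = (case S of (n, q, q') \<Rightarrow>
     (\<exists>x\<in>vecs n. x \<noteq> zvec \<and> q x = 0) \<or> (\<exists>f\<in>vecs n. f \<noteq> zvec \<and> q' f = 0))"

definition anisotropic :: "'a::field ssqs \<Rightarrow> bool" where
  "anisotropic S \<longleftrightarrow> \<not> isotropic S"

definition subspace_of :: "nat \<Rightarrow> 'a::field vec set \<Rightarrow> bool" where
  "subspace_of n U \<longleftrightarrow> U \<subseteq> vecs n \<and> zvec \<in> U \<and>
     (\<forall>x\<in>U. \<forall>y\<in>U. vadd x y \<in> U) \<and> (\<forall>c. \<forall>x\<in>U. smul c x \<in> U)"

definition annihilator :: "nat \<Rightarrow> 'a::field vec set \<Rightarrow> 'a vec set" where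
  "annihilator n U = {f \<in> vecs n. \<forall>x\<in>U. pairing n f x = 0}"

definition metabolic :: "'a::field ssqs \<Rightarrow> bool" where
  "metabolic S = (case S of (n, q, q') \<Rightarrow>
     (\<exists>U. subspace_of n U \<and> (\<forall>x\<in>U. q x = 0) \<and> (\<forall>f\<in>annihilator n U. q' f = 0)))"

end

theory Submission
  imports Defs
begin

lemma char2_add_self:
  assumes "CHAR('a::field) = 2" shows "(a::'a) + a = 0"
proof -
  have "of_nat CHAR('a) = (0::'a)" by (rule of_nat_CHAR)
  then have "of_nat 2 = (0::'a)" using assms by metis
  then have "(2::'a) = 0" by simp
  then have "2 * a = 0" by simp
  then show ?thesis by (metis mult_2)
qed
lemma char2_eq:
  assumes "CHAR('a::field) = 2" shows "((a::'a) + b = 0) = (a = b)"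
proof
  assume "a + b = 0" then have "a = - b" by (simp add: eq_neg_iff_add_eq_0)
  also have "- b = b" using char2_add_self[OF assms, of b] by (simp add: minus_unique)
  finally show "a = b" .
next
  assume "a = b" then show "a + b = 0" using char2_add_self[OF assms] by simp
qed
lemma vadd_apply[simp]: "vadd x y i = x i + y i" by (simp add: vadd_def)
lemma smul_apply[simp]: "smul c x i = c * x i" by (simp add: smul_def)
lemma zvec_apply[simp]: "zvec i = 0" by (simp add: zvec_def)
lemma unit_vec_apply: "unit_vec j i = (if i = j then 1 else 0)" by (simp add: unit_vec_def)
lemma first_part_apply: "first_part n x i = (if i < n then x i else 0)" by (simp add: first_part_def)
lemma second_part_apply: "second_part n x i = x (i + n)" by (simp add: second_part_def)

lemma vecs_iff: "x \<in> vecs n \<longleftrightarrow> (\<forall>i\<ge>n. x i = 0)" by (simp add: vecs_def)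

lemma vadd_vecs[intro]: "(x::'a::field vec) \<in> vecs n \<Longrightarrow> y \<in> vecs n \<Longrightarrow> vadd x y \<in> vecs n"
  by (simp add: vecs_def)
lemma smul_vecs[intro]: "(x::'a::field vec) \<in> vecs n \<Longrightarrow> smul c x \<in> vecs n"
  by (simp add: vecs_def)
lemma zvec_vecs[intro,simp]: "zvec \<in> vecs n" by (simp add: vecs_def)
lemma unit_vec_vecs[intro]: "j < n \<Longrightarrow> unit_vec j \<in> vecs n"
  by (simp add: vecs_def unit_vec_def)
lemma first_part_vecs[intro,simp]: "first_part n x \<in> vecs n" by (simp add: vecs_def first_part_apply)
lemma vecs_mono: "x \<in> vecs m \<Longrightarrow> m \<le> n \<Longrightarrow> x \<in> vecs n" by (simp add: vecs_def)
lemma first_part_id: "x \<in> vecs n \<Longrightarrow> first_part n x = x"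
  by (auto simp: vecs_def fun_eq_iff first_part_apply)

lemma pairing_vadd2: "pairing n f (vadd x y) = pairing n f x + pairing n f y"
  by (simp add: pairing_def distrib_left sum.distrib)
lemma pairing_smul2: "pairing n f (smul c x) = c * pairing n f x"
  by (simp add: pairing_def sum_distrib_left algebra_simps)
lemma pairing_vadd1: "pairing n (vadd f g) x = pairing n f x + pairing n g x"
  by (simp add: pairing_def distrib_right sum.distrib)
lemma pairing_smul1: "pairing n (smul c f) x = c * pairing n f x"
  by (simp add: pairing_def sum_distrib_left algebra_simps)
lemma pairing_zvec2[simp]: "pairing n f zvec = 0" by (simp add: pairing_def)
lemma pairing_zvec1[simp]: "pairing n zvec x = 0" by (simp add: pairing_def)
lemma pairing_comm: "pairing n f x = pairing n x f"
  by (simp add: pairing_def mult.commute)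
lemma pairing_Suc: "pairing (Suc n) f x = pairing n f x + f n * x n"
  by (simp add: pairing_def)
lemma pairing_unit2: "j < n \<Longrightarrow> pairing n f (unit_vec j) = f j"
proof -
  assume "j < n"
  have "(\<Sum>i<n. f i * (if i = j then 1 else 0)) = (\<Sum>i<n. if i = j then f i else 0)"
    by (rule sum.cong) auto
  then show ?thesis using \<open>j<n\<close> by (simp add: pairing_def unit_vec_def)
qed
lemma pairing_unit1: "j < n \<Longrightarrow> pairing n (unit_vec j) x = x j"
  using pairing_unit2[of j n x] by (simp add: pairing_comm)

lemma pairing_vecs_le:
  assumes "f \<in> vecs m" "m \<le> n" shows "pairing n f x = pairing m f x"
proof -
  have e: "{..<n} = {..<m} \<union> {m..<n}" using assms(2) by auto
  have "pairing n f x = (\<Sum>i\<in>{..<m} \<union> {m..<n}. f i * x i)"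
    unfolding pairing_def e ..
  also have "\<dots> = (\<Sum>i<m. f i * x i) + (\<Sum>i\<in>{m..<n}. f i * x i)"
    by (rule sum.union_disjoint) auto
  also have "(\<Sum>i\<in>{m..<n}. f i * x i) = 0" using assms(1) by (simp add: vecs_def)
  finally show ?thesis by (simp add: pairing_def)
qed

lemma pairing_first_part: "pairing m f (first_part m x) = pairing m f x"
  by (simp add: pairing_def first_part_apply)

lemma vecs_ext:
  assumes "x \<in> vecs n" "y \<in> vecs n" "\<And>i. i < n \<Longrightarrow> x i = y i" shows "x = y"
proof (rule ext)
  fix i show "x i = y i"
  proof (cases "i < n")
    case True then show ?thesis using assms(3) by simp
  next
    case False then show ?thesis using assms(1,2) by (simp add: vecs_def)
  qed
qed

lemma first_part_0: "first_part 0 x = (zvec :: 'a::field vec)"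
  by (simp add: fun_eq_iff first_part_apply)

lemma first_part_Suc:
  "first_part (Suc m) (x::'a::field vec) = vadd (first_part m x) (smul (x m) (unit_vec m))"
  by (auto simp: fun_eq_iff unit_vec_def less_Suc_eq first_part_apply)

lemma ts_zero:
  assumes "totally_singular n Q" shows "Q zvec = 0"
proof -
  have "Q (smul 0 zvec) = 0 ^ 2 * Q zvec" using assms by (simp add: totally_singular_def)
  moreover have "smul 0 zvec = (zvec::'a vec)" by (simp add: fun_eq_iff)
  ultimately show ?thesis by simp
qed

lemma ts_add:
  assumes "totally_singular n Q" "x \<in> vecs n" "y \<in> vecs n"
  shows "Q (vadd x y) = Q x + Q y"
  using assms by (simp add: totally_singular_def)

lemma ts_smul:
  assumes "totally_singular n Q" "x \<in> vecs n"
  shows "Q (smul c x) = c ^ 2 * Q x"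
  using assms by (simp add: totally_singular_def)

lemma ts_expand_aux:
  assumes "totally_singular n Q" "x \<in> vecs n" "m \<le> n"
  shows "Q (first_part m x) = (\<Sum>j<m. (x j)^2 * Q (unit_vec j))"
  using assms(3)
proof (induction m)
  case 0
  have "Q (first_part 0 x) = 0" unfolding first_part_0 by (rule ts_zero[OF assms(1)])
  then show ?case by (simp only: lessThan_0 sum.empty)
next
  case (Suc m)
  then have mn: "m < n" by simp
  have v1: "first_part m x \<in> vecs n" using mn by (intro vecs_mono[OF first_part_vecs]) simp
  have v2: "smul (x m) (unit_vec m) \<in> vecs n" using mn by (intro smul_vecs unit_vec_vecs)
  have "Q (first_part (Suc m) x) = Q (first_part m x) + Q (smul (x m) (unit_vec m))"
    unfolding first_part_Suc by (rule ts_add[OF assms(1) v1 v2])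
  also have "Q (smul (x m) (unit_vec m)) = (x m)^2 * Q (unit_vec m)"
    by (rule ts_smul[OF assms(1) unit_vec_vecs[OF mn]])
  also have "Q (first_part m x) = (\<Sum>j<m. (x j)^2 * Q (unit_vec j))"
    using mn by (intro Suc.IH) simp
  finally show ?case by (simp only: sum.lessThan_Suc)
qed

lemma ts_expand:
  assumes "totally_singular n Q" "x \<in> vecs n"
  shows "Q x = (\<Sum>j<n. (x j)^2 * Q (unit_vec j))"
  using ts_expand_aux[OF assms order_refl] first_part_id[OF assms(2)] by simp

lemma lin_zero:
  assumes "linear_on n L" shows "L zvec = zvec"
proof -
  have "L (smul 0 zvec) = smul 0 (L zvec)" using assms by (simp add: linear_on_def)
  moreover have "smul 0 zvec = (zvec::'a::field vec)" by (simp add: fun_eq_iff)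
  moreover have "smul 0 (L zvec) = (zvec::'a::field vec)" by (simp add: fun_eq_iff)
  ultimately show ?thesis by simp
qed

lemma lin_add:
  assumes "linear_on n L" "x \<in> vecs n" "y \<in> vecs n" shows "L (vadd x y) = vadd (L x) (L y)"
  using assms by (simp add: linear_on_def)

lemma lin_smul:
  assumes "linear_on n L" "x \<in> vecs n" shows "L (smul c x) = smul c (L x)"
  using assms by (simp add: linear_on_def)

lemma adjoint_aux:
  assumes "linear_on n1 L" "x \<in> vecs n1" "m \<le> n1"
  shows "pairing n2 g (L (first_part m x)) = (\<Sum>j<m. x j * pairing n2 g (L (unit_vec j)))"
  using assms(3)
proof (induction m)
  case 0
  have "pairing n2 g (L (first_part 0 x)) = 0" unfolding first_part_0 lin_zero[OF assms(1)] by (rule pairing_zvec2)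
  then show ?case by (simp only: lessThan_0 sum.empty)
next
  case (Suc m)
  then have mn: "m < n1" by simp
  have v1: "first_part m x \<in> vecs n1" using mn by (intro vecs_mono[OF first_part_vecs]) simp
  have v2: "smul (x m) (unit_vec m) \<in> vecs n1" using mn by (intro smul_vecs unit_vec_vecs)
  have "L (first_part (Suc m) x) = vadd (L (first_part m x)) (L (smul (x m) (unit_vec m)))"
    unfolding first_part_Suc by (rule lin_add[OF assms(1) v1 v2])
  also have "L (smul (x m) (unit_vec m)) = smul (x m) (L (unit_vec m))"
    by (rule lin_smul[OF assms(1) unit_vec_vecs[OF mn]])
  finally have e: "L (first_part (Suc m) x) = vadd (L (first_part m x)) (smul (x m) (L (unit_vec m)))" .
  have "pairing n2 g (L (first_part m x)) = (\<Sum>j<m. x j * pairing n2 g (L (unit_vec j)))"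
    using mn by (intro Suc.IH) simp
  then show ?case unfolding e pairing_vadd2 pairing_smul2 by (simp only: sum.lessThan_Suc)
qed

lemma adjoint:
  assumes "linear_on n1 L" "x \<in> vecs n1"
  shows "pairing n2 g (L x) = pairing n1 (dual_map n1 n2 L g) x"
proof -
  have "pairing n2 g (L x) = (\<Sum>j<n1. x j * pairing n2 g (L (unit_vec j)))"
    using adjoint_aux[OF assms order_refl] first_part_id[OF assms(2)] by simp
  also have "\<dots> = pairing n1 (dual_map n1 n2 L g) x"
    unfolding pairing_def dual_map_def by (rule sum.cong) (auto simp: mult.commute)
  finally show ?thesis .
qed

lemma dual_map_vecs[intro,simp]: "dual_map n1 n2 L g \<in> vecs n1"
  by (simp add: dual_map_def vecs_def)

lemma dual_map_vadd: "dual_map n1 n2 L (vadd g h) = vadd (dual_map n1 n2 L g) (dual_map n1 n2 L h)"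
  by (simp add: dual_map_def fun_eq_iff pairing_vadd1)

lemma dual_map_smul: "dual_map n1 n2 L (smul c g) = smul c (dual_map n1 n2 L g)"
  by (simp add: dual_map_def fun_eq_iff pairing_smul1)

definition iso_map :: "nat \<Rightarrow> ('a::field vec \<Rightarrow> 'a) \<Rightarrow> ('a vec \<Rightarrow> 'a) \<Rightarrow> nat \<Rightarrow> ('a vec \<Rightarrow> 'a) \<Rightarrow> ('a vec \<Rightarrow> 'a) \<Rightarrow> ('a vec \<Rightarrow> 'a vec) \<Rightarrow> bool" where
  "iso_map n1 q1 q1' n2 q2 q2' L \<longleftrightarrow> linear_on n1 L \<and> bij_betw L (vecs n1) (vecs n2) \<and>
     (\<forall>x\<in>vecs n1. q2 (L x) = q1 x) \<and> (\<forall>g\<in>vecs n2. q1' (dual_map n1 n2 L g) = q2' g)"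

lemma isometric_iff: "isometric (n1,q1,q1') (n2,q2,q2') \<longleftrightarrow> (\<exists>L. iso_map n1 q1 q1' n2 q2 q2' L)"
  by (simp add: isometric_def iso_map_def)

lemma dual_map_unit: "j < n1 \<Longrightarrow> dual_map n1 n2 L g j = pairing n2 g (L (unit_vec j))"
  by (simp add: dual_map_def)

lemma iso_map_inv:
  assumes "iso_map n1 q1 q1' n2 q2 q2' L"
  shows "iso_map n2 q2 q2' n1 q1 q1' (inv_into (vecs n1) L)"
proof -
  let ?Li = "inv_into (vecs n1) L"
  have lin: "linear_on n1 L" and bij: "bij_betw L (vecs n1) (vecs n2)"
    and qq: "\<forall>x\<in>vecs n1. q2 (L x) = q1 x" and dd: "\<forall>g\<in>vecs n2. q1' (dual_map n1 n2 L g) = q2' g"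
    using assms by (auto simp: iso_map_def)
  have bij': "bij_betw ?Li (vecs n2) (vecs n1)" by (rule bij_betw_inv_into[OF bij])
  have Li_in: "\<And>y. y \<in> vecs n2 \<Longrightarrow> ?Li y \<in> vecs n1" using bij' bij_betwE by blast
  have LLi: "\<And>y. y \<in> vecs n2 \<Longrightarrow> L (?Li y) = y" using bij bij_betw_inv_into_right by fast
  have LiL: "\<And>x. x \<in> vecs n1 \<Longrightarrow> ?Li (L x) = x" using bij bij_betw_inv_into_left by fast
  have lin': "linear_on n2 ?Li"
    unfolding linear_on_def
  proof (intro conjI ballI allI)
    fix y1 y2 :: "'a vec" assume y: "y1 \<in> vecs n2" "y2 \<in> vecs n2"
    have "L (vadd (?Li y1) (?Li y2)) = vadd y1 y2"
      using lin_add[OF lin Li_in[OF y(1)] Li_in[OF y(2)]] LLi y by simp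
    then have "?Li (vadd y1 y2) = ?Li (L (vadd (?Li y1) (?Li y2)))" by simp
    also have "\<dots> = vadd (?Li y1) (?Li y2)" using LiL Li_in y by blast
    finally show "?Li (vadd y1 y2) = vadd (?Li y1) (?Li y2)" .
  next
    fix c and y :: "'a vec" assume y: "y \<in> vecs n2"
    have "L (smul c (?Li y)) = smul c y"
      using lin_smul[OF lin Li_in[OF y]] LLi y by simp
    then have "?Li (smul c y) = ?Li (L (smul c (?Li y)))" by simp
    also have "\<dots> = smul c (?Li y)" using LiL Li_in y by blast
    finally show "?Li (smul c y) = smul c (?Li y)" .
  qed
  have q': "\<forall>y\<in>vecs n2. q1 (?Li y) = q2 y"
  proof
    fix y :: "'a vec" assume y: "y \<in> vecs n2"
    have "q1 (?Li y) = q2 (L (?Li y))" using qq Li_in[OF y] by simp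
    then show "q1 (?Li y) = q2 y" using LLi[OF y] by simp
  qed
  have d': "\<forall>f\<in>vecs n1. q2' (dual_map n2 n1 ?Li f) = q1' f"
  proof
    fix f :: "'a vec" assume f: "f \<in> vecs n1"
    let ?g = "dual_map n2 n1 ?Li f"
    have "dual_map n1 n2 L ?g = f"
    proof (rule vecs_ext[OF dual_map_vecs f])
      fix j assume j: "j < n1"
      have Lj: "L (unit_vec j) \<in> vecs n2" using bij bij_betwE unit_vec_vecs[OF j] by blast
      have "dual_map n1 n2 L ?g j = pairing n2 ?g (L (unit_vec j))" by (rule dual_map_unit[OF j])
      also have "\<dots> = pairing n1 f (?Li (L (unit_vec j)))" by (rule adjoint[OF lin' Lj, symmetric])
      also have "\<dots> = pairing n1 f (unit_vec j)" by (subst LiL[OF unit_vec_vecs[OF j]]) (rule refl)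
      also have "\<dots> = f j" by (rule pairing_unit2[OF j])
      finally show "dual_map n1 n2 L ?g j = f j" .
    qed
    then have "q1' f = q1' (dual_map n1 n2 L ?g)" by simp
    also have "\<dots> = q2' ?g" using dd dual_map_vecs by blast
    finally show "q2' ?g = q1' f" by simp
  qed
  show ?thesis unfolding iso_map_def using lin' bij' q' d' by blast
qed

lemma iso_map_comp:
  assumes "iso_map n1 q1 q1' n2 q2 q2' L1" "iso_map n2 q2 q2' n3 q3 q3' L2"
  shows "iso_map n1 q1 q1' n3 q3 q3' (L2 \<circ> L1)"
proof -
  have lin1: "linear_on n1 L1" and bij1: "bij_betw L1 (vecs n1) (vecs n2)"
    and qq1: "\<forall>x\<in>vecs n1. q2 (L1 x) = q1 x" and dd1: "\<forall>g\<in>vecs n2. q1' (dual_map n1 n2 L1 g) = q2' g"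
    using assms(1) by (auto simp: iso_map_def)
  have lin2: "linear_on n2 L2" and bij2: "bij_betw L2 (vecs n2) (vecs n3)"
    and qqb: "\<forall>x\<in>vecs n2. q3 (L2 x) = q2 x" and dd2: "\<forall>g\<in>vecs n3. q2' (dual_map n2 n3 L2 g) = q3' g"
    using assms(2) by (auto simp: iso_map_def)
  have in1: "\<And>x. x \<in> vecs n1 \<Longrightarrow> L1 x \<in> vecs n2" using bij1 bij_betwE by blast
  have lin: "linear_on n1 (L2 \<circ> L1)"
    unfolding linear_on_def
  proof (intro conjI ballI allI)
    fix x y :: "'a vec" assume "x \<in> vecs n1" "y \<in> vecs n1"
    then show "(L2 \<circ> L1) (vadd x y) = vadd ((L2 \<circ> L1) x) ((L2 \<circ> L1) y)"
      using lin_add[OF lin1] lin_add[OF lin2] in1 by simp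
  next
    fix c and x :: "'a vec" assume "x \<in> vecs n1"
    then show "(L2 \<circ> L1) (smul c x) = smul c ((L2 \<circ> L1) x)"
      using lin_smul[OF lin1] lin_smul[OF lin2] in1 by simp
  qed
  have bij: "bij_betw (L2 \<circ> L1) (vecs n1) (vecs n3)" by (rule bij_betw_trans[OF bij1 bij2])
  have qq: "\<forall>x\<in>vecs n1. q3 ((L2 \<circ> L1) x) = q1 x" using qq1 qqb in1 by simp
  have dd: "\<forall>g\<in>vecs n3. q1' (dual_map n1 n3 (L2 \<circ> L1) g) = q3' g"
  proof
    fix g :: "'a vec" assume g: "g \<in> vecs n3"
    have e: "dual_map n1 n3 (L2 \<circ> L1) g = dual_map n1 n2 L1 (dual_map n2 n3 L2 g)"
    proof (rule vecs_ext[OF dual_map_vecs dual_map_vecs])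
      fix j assume j: "j < n1"
      have "dual_map n1 n3 (L2 \<circ> L1) g j = pairing n3 g (L2 (L1 (unit_vec j)))"
        unfolding dual_map_unit[OF j] comp_apply ..
      also have "\<dots> = pairing n2 (dual_map n2 n3 L2 g) (L1 (unit_vec j))"
        by (rule adjoint[OF lin2 in1[OF unit_vec_vecs[OF j]]])
      also have "\<dots> = dual_map n1 n2 L1 (dual_map n2 n3 L2 g) j" unfolding dual_map_unit[OF j] ..
      finally show "dual_map n1 n3 (L2 \<circ> L1) g j = dual_map n1 n2 L1 (dual_map n2 n3 L2 g) j" .
    qed
    show "q1' (dual_map n1 n3 (L2 \<circ> L1) g) = q3' g"
      unfolding e using dd1 dd2 g dual_map_vecs by simp
  qed
  show ?thesis unfolding iso_map_def using lin bij qq dd by blast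
qed

lemma isometric_sym:
  assumes "isometric S T" shows "isometric T S"
proof -
  obtain n1 q1 q1' where S: "S = (n1,q1,q1')" by (cases S) auto
  obtain n2 q2 q2' where T: "T = (n2,q2,q2')" by (cases T) auto
  obtain L where "iso_map n1 q1 q1' n2 q2 q2' L" using assms unfolding S T isometric_iff by blast
  then have "iso_map n2 q2 q2' n1 q1 q1' (inv_into (vecs n1) L)" by (rule iso_map_inv)
  then show ?thesis unfolding S T isometric_iff by blast
qed

lemma isometric_trans:
  assumes "isometric S T" "isometric T U" shows "isometric S U"
proof -
  obtain n1 q1 q1' where S: "S = (n1,q1,q1')" by (cases S) auto
  obtain n2 q2 q2' where T: "T = (n2,q2,q2')" by (cases T) auto
  obtain n3 q3 q3' where U: "U = (n3,q3,q3')" by (cases U) auto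
  obtain L1 where 1: "iso_map n1 q1 q1' n2 q2 q2' L1" using assms(1) unfolding S T isometric_iff by blast
  obtain L2 where 2: "iso_map n2 q2 q2' n3 q3 q3' L2" using assms(2) unfolding U T isometric_iff by blast
  have "iso_map n1 q1 q1' n3 q3 q3' (L2 \<circ> L1)" by (rule iso_map_comp[OF 1 2])
  then show ?thesis unfolding S U isometric_iff by blast
qed

lemma first_part_vadd: "first_part n (vadd x y) = vadd (first_part n x) (first_part n (y::'a::field vec))"
  by (simp add: fun_eq_iff first_part_apply)
lemma first_part_smul: "first_part n (smul c x) = smul c (first_part n (x::'a::field vec))"
  by (simp add: fun_eq_iff first_part_apply)
lemma second_part_vadd: "second_part n (vadd x y) = vadd (second_part n x) (second_part n (y::'a::field vec))"
  by (simp add: fun_eq_iff second_part_apply)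
lemma second_part_smul: "second_part n (smul c x) = smul c (second_part n (x::'a::field vec))"
  by (simp add: fun_eq_iff second_part_apply)
lemma second_part_vecs: "x \<in> vecs (n1 + n2) \<Longrightarrow> second_part n1 x \<in> vecs n2"
  by (simp add: vecs_def second_part_apply)
lemma second_part_small: "(x::'a::field vec) \<in> vecs n \<Longrightarrow> second_part n x = zvec"
  by (simp add: vecs_def second_part_apply fun_eq_iff)

lemma ts_orth:
  assumes "totally_singular n1 (q::'a::field vec \<Rightarrow> 'a)" "totally_singular n2 r"
  shows "totally_singular (n1+n2) (\<lambda>x. q (first_part n1 x) + r (second_part n1 x))"
  unfolding totally_singular_def
proof (intro conjI ballI allI)
  fix c and x :: "'a vec" assume x: "x \<in> vecs (n1+n2)"
  show "q (first_part n1 (smul c x)) + r (second_part n1 (smul c x)) =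
        c ^ 2 * (q (first_part n1 x) + r (second_part n1 x))"
    unfolding first_part_smul second_part_smul
    using ts_smul[OF assms(1) first_part_vecs] ts_smul[OF assms(2) second_part_vecs[OF x]]
    by (simp add: distrib_left)
next
  fix x y :: "'a vec" assume x: "x \<in> vecs (n1+n2)" and y: "y \<in> vecs (n1+n2)"
  show "q (first_part n1 (vadd x y)) + r (second_part n1 (vadd x y)) =
        q (first_part n1 x) + r (second_part n1 x) + (q (first_part n1 y) + r (second_part n1 y))"
    unfolding first_part_vadd second_part_vadd
    using ts_add[OF assms(1) first_part_vecs first_part_vecs] ts_add[OF assms(2) second_part_vecs[OF x] second_part_vecs[OF y]]
    by (simp add: algebra_simps)
qed

lemma orth_sum_eq:
  "orth_sum (n1,q1,q1') (n2,q2,q2') = (n1 + n2, \<lambda>x. q1 (first_part n1 x) + q2 (second_part n1 x),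
      \<lambda>f. q1' (first_part n1 f) + q2' (second_part n1 f))"
  by (simp add: orth_sum_def)

lemma is_ssqs_orth:
  assumes "is_ssqs (n1,q1,q1')" "is_ssqs (n2,q2,q2')"
  shows "is_ssqs (orth_sum (n1,q1,q1') (n2,q2,q2'))"
  using assms unfolding orth_sum_eq is_ssqs_def by (simp add: ts_orth)

lemma unit_vec_smul_eq:
  assumes "x \<in> vecs 1" "x 0 \<noteq> (0::'a::field)" shows "smul (1 / x 0) x = unit_vec 0"
proof (rule ext)
  fix i show "smul (1 / x 0) x i = unit_vec 0 i"
    using assms by (cases "i = 0") (auto simp: vecs_def unit_vec_def)
qed

lemma metab1:
  assumes "metabolic (1, r, r')" "is_ssqs (1, r, (r'::'a::field vec \<Rightarrow> 'a))"
  shows "r (unit_vec 0) = 0 \<or> r' (unit_vec 0) = 0"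
proof -
  obtain U where U: "subspace_of 1 U" "\<forall>x\<in>U. r x = 0" "\<forall>f\<in>annihilator 1 U. r' f = 0"
    using assms(1) by (auto simp: metabolic_def)
  show ?thesis
  proof (cases "\<exists>x\<in>U. x 0 \<noteq> 0")
    case True
    then obtain x where x: "x \<in> U" "x 0 \<noteq> 0" by blast
    have "x \<in> vecs 1" using x U(1) by (auto simp: subspace_of_def)
    then have e: "smul (1 / x 0) x = unit_vec 0" using x unit_vec_smul_eq[of x] by blast
    have "smul (1 / x 0) x \<in> U" using U(1) x by (auto simp: subspace_of_def)
    then have "unit_vec 0 \<in> U" unfolding e .
    then show ?thesis using U(2) by blast
  next
    case False
    have "unit_vec 0 \<in> annihilator 1 U"
      unfolding annihilator_def using False by (auto simp: pairing_unit1)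
    then show ?thesis using U(3) by blast
  qed
qed

definition decomp :: "nat \<Rightarrow> ('a::field vec \<Rightarrow> 'a) \<Rightarrow> ('a vec \<Rightarrow> 'a) \<Rightarrow> nat \<Rightarrow> ('a vec \<Rightarrow> 'a) \<Rightarrow> ('a vec \<Rightarrow> 'a) \<Rightarrow> bool" where
  "decomp d p p' n q q' \<longleftrightarrow> d \<le> n \<and> is_ssqs (n, q, q') \<and> (\<forall>x\<in>vecs d. q x = p x \<and> q' x = p' x) \<and>
      (\<forall>i. d \<le> i \<and> i < n \<longrightarrow> q (unit_vec i) = 0 \<or> q' (unit_vec i) = 0)"

lemma osl_struct:
  assumes "is_ssqs (d, p, p')" "\<forall>m\<in>set ms. is_ssqs m \<and> dim m = 1 \<and> metabolic m"
  shows "\<exists>n q q'. orth_sum_list (d,p,p') ms = (n, q, q') \<and> decomp d p p' n q q'"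
  using assms(2)
proof (induction ms rule: rev_induct)
  case Nil
  then show ?case using assms(1) by (auto simp: orth_sum_list_def decomp_def)
next
  case (snoc m ms)
  then obtain n q q' where T: "orth_sum_list (d,p,p') ms = (n, q, q')" and D: "decomp d p p' n q q'" by auto
  have m: "is_ssqs m" "dim m = 1" "metabolic m" using snoc.prems by auto
  then obtain r r' where mr: "m = (1, r, r')" by (cases m) (auto simp: dim_def)
  have rts: "totally_singular 1 r" "totally_singular 1 r'" using m(1) mr by (auto simp: is_ssqs_def)
  have r0: "r (unit_vec 0) = 0 \<or> r' (unit_vec 0) = 0" using metab1 m mr by blast
  have e: "orth_sum_list (d,p,p') (ms @ [m]) = orth_sum (n,q,q') (1,r,r')"
    using T mr by (simp add: orth_sum_list_def)
  let ?Q = "\<lambda>x. q (first_part n x) + r (second_part n x)"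
  let ?Q' = "\<lambda>f. q' (first_part n f) + r' (second_part n f)"
  have dn: "d \<le> n" and ss: "is_ssqs (n,q,q')" and agree: "\<forall>x\<in>vecs d. q x = p x \<and> q' x = p' x"
    and lines: "\<forall>i. d \<le> i \<and> i < n \<longrightarrow> q (unit_vec i) = 0 \<or> q' (unit_vec i) = 0"
    using D by (auto simp: decomp_def)
  have ss': "is_ssqs (n+1, ?Q, ?Q')"
    using is_ssqs_orth[OF ss m(1)[unfolded mr]] by (simp add: orth_sum_eq)
  have agree': "\<forall>x\<in>vecs d. ?Q x = p x \<and> ?Q' x = p' x"
  proof
    fix x :: "'a vec" assume x: "x \<in> vecs d"
    then have xn: "x \<in> vecs n" using dn vecs_mono by blast
    show "?Q x = p x \<and> ?Q' x = p' x"
      using first_part_id[OF xn] second_part_small[OF xn] ts_zero[OF rts(1)] ts_zero[OF rts(2)] agree x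
      by simp
  qed
  have lines': "\<forall>i. d \<le> i \<and> i < n+1 \<longrightarrow> ?Q (unit_vec i) = 0 \<or> ?Q' (unit_vec i) = 0"
  proof (intro allI impI)
    fix i assume i: "d \<le> i \<and> i < n+1"
    show "?Q (unit_vec i) = 0 \<or> ?Q' (unit_vec i) = 0"
    proof (cases "i < n")
      case True
      have "first_part n (unit_vec i) = (unit_vec i :: 'a vec)" using True by (intro first_part_id unit_vec_vecs)
      moreover have "second_part n (unit_vec i) = (zvec :: 'a vec)" using True by (intro second_part_small unit_vec_vecs)
      ultimately show ?thesis using lines i True ts_zero[OF rts(1)] ts_zero[OF rts(2)] by simp
    next
      case False
      then have "i = n" using i by simp
      have "first_part n (unit_vec n) = (zvec :: 'a vec)" by (simp add: fun_eq_iff first_part_apply unit_vec_def)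
      moreover have "second_part n (unit_vec n) = (unit_vec 0 :: 'a vec)" by (simp add: fun_eq_iff second_part_apply unit_vec_def)
      moreover have "q zvec = 0" "q' zvec = 0" using ss ts_zero by (auto simp: is_ssqs_def)
      ultimately show ?thesis using \<open>i = n\<close> r0 by simp
    qed
  qed
  have "decomp d p p' (n+1) ?Q ?Q'" unfolding decomp_def using dn ss' agree' lines' by simp
  then show ?case unfolding e orth_sum_eq by blast
qed

lemma vecs_Suc_last: "x \<in> vecs (Suc n) \<Longrightarrow> x n = 0 \<Longrightarrow> x \<in> vecs n"
  unfolding vecs_def
proof (intro CollectI allI impI)
  fix i assume a: "x \<in> {x. \<forall>i\<ge>Suc n. x i = 0}" "x n = 0" and i: "n \<le> i"
  show "x i = 0"
  proof (cases "i = n")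
    case True then show ?thesis using a(2) by simp
  next
    case False then have "Suc n \<le> i" using i by simp
    then show ?thesis using a(1) by simp
  qed
qed

lemma vecs_0: "x \<in> vecs 0 \<Longrightarrow> x = (zvec::'a::zero vec)"
  by (simp add: vecs_def fun_eq_iff)

lemma DA:
  assumes "subspace_of n W" "x \<in> vecs n" "x \<notin> W"
  shows "\<exists>f\<in>annihilator n W. pairing n f (x::'a::field vec) \<noteq> 0"
  using assms
proof (induction n arbitrary: W x)
  case 0
  then have "x = zvec" using vecs_0 by blast
  moreover have "zvec \<in> W" using 0(1) by (simp only: subspace_of_def)
  ultimately have False using 0(3) by blast
  then show ?case ..
next
  case (Suc n)
  have WS: "W \<subseteq> vecs (Suc n)" "zvec \<in> W" "\<forall>x\<in>W. \<forall>y\<in>W. vadd x y \<in> W" "\<forall>c. \<forall>x\<in>W. smul c x \<in> W"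
    using Suc.prems(1) by (auto simp: subspace_of_def)
  show ?case
  proof (cases "\<forall>w\<in>W. w n = 0")
    case True
    show ?thesis
    proof (cases "x n = 0")
      case False
      have "unit_vec n \<in> vecs (Suc n)" by (rule unit_vec_vecs) simp
      then have "unit_vec n \<in> annihilator (Suc n) W"
        unfolding annihilator_def using True by (simp add: pairing_unit1)
      moreover have "pairing (Suc n) (unit_vec n) x \<noteq> 0" using False by (simp add: pairing_unit1)
      ultimately show ?thesis by blast
    next
      case x0: True
      have xn: "x \<in> vecs n" using vecs_Suc_last Suc.prems(2) x0 by blast
      have Wn: "W \<subseteq> vecs n" using WS(1) True vecs_Suc_last by blast
      have sub: "subspace_of n W" using Wn WS by (simp add: subspace_of_def)
      obtain f where f: "f \<in> annihilator n W" "pairing n f x \<noteq> 0" using Suc.IH[OF sub xn Suc.prems(3)] by blast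
      have fv: "f \<in> vecs n" using f(1) by (simp add: annihilator_def)
      have pe: "\<And>y. pairing (Suc n) f y = pairing n f y" using pairing_vecs_le[OF fv, of "Suc n"] by simp
      have "f \<in> annihilator (Suc n) W" using f(1) fv vecs_mono[OF fv] by (simp add: annihilator_def pe)
      moreover have "pairing (Suc n) f x \<noteq> 0" using f(2) pe[of x] by simp
      ultimately show ?thesis by blast
    qed
  next
    case False
    then obtain w where w: "w \<in> W" "w n \<noteq> 0" by blast
    define w0 where "w0 = smul (1 / w n) w"
    have w0W: "w0 \<in> W" using WS(4) w(1) unfolding w0_def by blast
    have w0n: "w0 n = 1" using w(2) by (simp add: w0_def)
    define W' where "W' = W \<inter> vecs n"
    have sub: "subspace_of n W'" unfolding W'_def using WS by (auto simp: subspace_of_def)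
    define x' where "x' = vadd x (smul (- x n) w0)"
    have w0S: "w0 \<in> vecs (Suc n)" using WS(1) w0W by (rule subsetD)
    have x'S: "x' \<in> vecs (Suc n)" unfolding x'_def by (rule vadd_vecs[OF Suc.prems(2) smul_vecs[OF w0S]])
    have "x' n = 0" using w0n by (simp add: x'_def)
    then have x'n: "x' \<in> vecs n" using vecs_Suc_last[OF x'S] by blast
    have x'W: "x' \<notin> W'"
    proof
      assume "x' \<in> W'"
      then have "x' \<in> W" by (simp add: W'_def)
      moreover have "smul (x n) w0 \<in> W" using WS(4) w0W by blast
      ultimately have "vadd x' (smul (x n) w0) \<in> W" using WS(3) by blast
      moreover have "vadd x' (smul (x n) w0) = x" by (simp add: x'_def fun_eq_iff)
      ultimately show False using Suc.prems(3) by simp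
    qed
    obtain f' where f': "f' \<in> annihilator n W'" "pairing n f' x' \<noteq> 0" using Suc.IH[OF sub x'n x'W] by blast
    have f'v: "f' \<in> vecs n" using f'(1) by (simp add: annihilator_def)
    define c where "c = pairing n f' w0"
    define f where "f = vadd f' (smul (- c) (unit_vec n))"
    have f'S: "f' \<in> vecs (Suc n)" using vecs_mono[OF f'v] by simp
    have fv: "f \<in> vecs (Suc n)" unfolding f_def by (rule vadd_vecs[OF f'S smul_vecs[OF unit_vec_vecs]]) simp
    have pf: "\<And>y. pairing (Suc n) f y = pairing n f' y - c * y n"
      unfolding f_def pairing_vadd1 pairing_smul1 using pairing_vecs_le[OF f'v, of "Suc n"] by (simp add: pairing_unit1)
    have pf2: "\<And>y. pairing n f' (vadd y (smul (- y n) w0)) = pairing n f' y - c * y n"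
      by (simp add: pairing_vadd2 pairing_smul2 c_def)
    have "f \<in> annihilator (Suc n) W"
      unfolding annihilator_def
    proof (intro CollectI conjI fv ballI)
      fix y assume y: "y \<in> W"
      have "smul (- y n) w0 \<in> W" using WS(4) w0W by blast
      then have "vadd y (smul (- y n) w0) \<in> W" using WS(3) y by blast
      moreover have "vadd y (smul (- y n) w0) \<in> vecs n"
      proof (rule vecs_Suc_last)
        have yS: "y \<in> vecs (Suc n)" using WS(1) y by (rule subsetD)
        show "vadd y (smul (- y n) w0) \<in> vecs (Suc n)" by (rule vadd_vecs[OF yS smul_vecs[OF w0S]])
        show "vadd y (smul (- y n) w0) n = 0" using w0n by simp
      qed
      ultimately have "vadd y (smul (- y n) w0) \<in> W'" by (simp add: W'_def)
      then have "pairing n f' (vadd y (smul (- y n) w0)) = 0" using f'(1) by (simp add: annihilator_def)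
      then show "pairing (Suc n) f y = 0" using pf pf2 by simp
    qed
    moreover have "pairing (Suc n) f x \<noteq> 0" using pf pf2[of x] f'(2) by (simp add: x'_def)
    ultimately show ?thesis by blast
  qed
qed

lemma annihilatorI: "f \<in> vecs n \<Longrightarrow> (\<And>x. x \<in> U \<Longrightarrow> pairing n f x = 0) \<Longrightarrow> f \<in> annihilator n U"
  by (simp add: annihilator_def)
lemma annihilatorD: "f \<in> annihilator n U \<Longrightarrow> x \<in> U \<Longrightarrow> pairing n f x = 0"
  by (simp add: annihilator_def)
lemma annihilator_vecs: "f \<in> annihilator n U \<Longrightarrow> f \<in> vecs n"
  by (simp add: annihilator_def)

lemma annihilator_subspace: "subspace_of n (annihilator n (W::'a::field vec set))"
  by (auto simp: subspace_of_def annihilator_def pairing_vadd1 pairing_smul1)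

lemma DA2:
  assumes "subspace_of n W" "f \<in> annihilator n (annihilator n W)"
  shows "(f::'a::field vec) \<in> W"
proof (rule ccontr)
  assume nf: "f \<notin> W"
  have fv: "f \<in> vecs n" using assms(2) by (simp add: annihilator_def)
  obtain g where g: "g \<in> annihilator n W" "pairing n g f \<noteq> 0" using DA[OF assms(1) fv nf] by blast
  have "pairing n f g = 0" using assms(2) g(1) by (simp add: annihilator_def)
  then show False using g(2) by (simp add: pairing_comm)
qed

definition Kset :: "nat \<Rightarrow> ('a::field vec \<Rightarrow> 'a) \<Rightarrow> 'a vec set" where
  "Kset n q' = {f \<in> vecs n. q' f = 0}"

abbreviation LL :: "nat \<Rightarrow> ('a::field vec \<Rightarrow> 'a) \<Rightarrow> 'a vec set" where
  "LL n q' \<equiv> annihilator n (Kset n q')"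

lemma K_subspace: "totally_singular n q' \<Longrightarrow> subspace_of n (Kset n q')"
  unfolding subspace_of_def Kset_def
  using ts_add[of n q'] ts_smul[of n q'] ts_zero[of n q'] by auto

lemma LL_vecs: "u \<in> LL n q' \<Longrightarrow> u \<in> vecs n"
  by (simp add: annihilator_def)

lemma LL_closed:
  assumes "u \<in> LL n q'" "v \<in> LL n q'"
  shows "vadd u v \<in> LL n q'" "smul c u \<in> LL n q'"
  using annihilator_subspace[of n "Kset n q'"] assms unfolding subspace_of_def by blast+

lemma vsub_eq: assumes "vadd a (smul (-1) b) = zvec" shows "a = (b::'a::field vec)"
proof (rule ext)
  fix i have "vadd a (smul (-1) b) i = zvec i" using assms by simp
  then have "a i - b i = 0" by simp
  then show "a i = b i" by simp
qed

lemma decomp_simps: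
  assumes "decomp d p p' n q q'"
  shows "d \<le> n" "totally_singular n q" "totally_singular n q'"
    "\<And>x. x \<in> vecs d \<Longrightarrow> q x = p x" "\<And>x. x \<in> vecs d \<Longrightarrow> q' x = p' x"
    "\<And>i. d \<le> i \<Longrightarrow> i < n \<Longrightarrow> q (unit_vec i) = 0 \<or> q' (unit_vec i) = 0"
  using assms by (auto simp: decomp_def is_ssqs_def)

lemma Proj:
  assumes D: "decomp d p p' n q q'" and u: "u \<in> LL n q'"
  shows "q u = p (first_part d u)"
proof -
  note ds = decomp_simps[OF D]
  have un: "u \<in> vecs n" using u by (rule LL_vecs)
  define r where "r = vadd u (smul (-1) (first_part d u))"
  have fn: "first_part d u \<in> vecs n" using vecs_mono[OF first_part_vecs ds(1)] .
  have rn: "r \<in> vecs n" unfolding r_def by (rule vadd_vecs[OF un smul_vecs[OF fn]])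
  have ue: "u = vadd (first_part d u) r" by (simp add: r_def fun_eq_iff)
  have "q u = q (first_part d u) + q r" by (subst ue, rule ts_add[OF ds(2) fn rn])
  also have "q r = 0"
  proof -
    have "q r = (\<Sum>j<n. (r j)^2 * q (unit_vec j))" by (rule ts_expand[OF ds(2) rn])
    also have "\<dots> = 0"
    proof (rule sum.neutral, rule ballI)
      fix j assume j: "j \<in> {..<n}"
      show "(r j)^2 * q (unit_vec j) = 0"
      proof (cases "j < d")
        case True then show ?thesis by (simp add: r_def first_part_apply)
      next
        case False
        then have "q (unit_vec j) = 0 \<or> q' (unit_vec j) = 0" using ds(6)[of j] j by simp
        then show ?thesis
        proof
          assume "q (unit_vec j) = 0" then show ?thesis by simp
        next
          assume "q' (unit_vec j) = 0"
          then have "unit_vec j \<in> Kset n q'" using j unit_vec_vecs[of j n] by (simp add: Kset_def)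
          then have "pairing n (unit_vec j) u = 0" using u pairing_comm[of n "unit_vec j" u]
            by (simp add: annihilator_def)
          then have "u j = 0" using j by (simp add: pairing_unit1)
          then show ?thesis using False by (simp add: r_def first_part_apply)
        qed
      qed
    qed
    finally show ?thesis .
  qed
  finally show ?thesis using ds(4)[OF first_part_vecs] by simp
qed

lemma aniso_iff:
  "anisotropic (d, p, p') \<longleftrightarrow> (\<forall>x\<in>vecs d. p x = 0 \<longrightarrow> x = zvec) \<and> (\<forall>f\<in>vecs d. p' f = 0 \<longrightarrow> f = zvec)"
  by (auto simp: anisotropic_def isotropic_def)

lemma Surj:
  assumes D: "decomp d p p' n q q'" and A: "anisotropic (d, p, p')" and u0: "u0 \<in> vecs d"
  shows "\<exists>u\<in>LL n q'. first_part d u = u0"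
proof (rule ccontr)
  assume nex: "\<not> (\<exists>u\<in>LL n q'. first_part d u = u0)"
  note ds = decomp_simps[OF D]
  define Im where "Im = first_part d ` LL n q'"
  have zL: "zvec \<in> LL n q'" using annihilator_subspace[of n "Kset n q'"] by (simp add: subspace_of_def)
  have sub: "subspace_of d Im"
    unfolding subspace_of_def
  proof (intro conjI ballI allI)
    show "Im \<subseteq> vecs d" unfolding Im_def by auto
    have "first_part d zvec = (zvec::'a vec)" by (simp add: fun_eq_iff first_part_apply)
    then show "zvec \<in> Im" unfolding Im_def using zL by (metis image_eqI)
  next
    fix x y assume "x \<in> Im" "y \<in> Im"
    then obtain u v where "u \<in> LL n q'" "v \<in> LL n q'" "x = first_part d u" "y = first_part d v"
      unfolding Im_def by blast
    then show "vadd x y \<in> Im" unfolding Im_def using LL_closed(1) first_part_vadd by (metis image_eqI)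
  next
    fix c x assume "x \<in> Im"
    then obtain u where "u \<in> LL n q'" "x = first_part d u" unfolding Im_def by blast
    then show "smul c x \<in> Im" unfolding Im_def using LL_closed(2) first_part_smul by (metis image_eqI)
  qed
  have "u0 \<notin> Im" using nex unfolding Im_def by blast
  then obtain h where h: "h \<in> annihilator d Im" "pairing d h u0 \<noteq> 0" using DA[OF sub u0] by blast
  have hd: "h \<in> vecs d" using h(1) by (simp add: annihilator_def)
  have hn: "h \<in> vecs n" using vecs_mono[OF hd ds(1)] .
  have "h \<in> annihilator n (LL n q')"
  proof (rule annihilatorI[OF hn])
    fix u assume u: "u \<in> LL n q'"
    have "pairing n h u = pairing d h u" by (rule pairing_vecs_le[OF hd ds(1)])
    also have "\<dots> = pairing d h (first_part d u)" by (simp add: pairing_first_part)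
    also have "\<dots> = 0" using h(1) u unfolding Im_def by (blast intro: annihilatorD)
    finally show "pairing n h u = 0" .
  qed
  then have "h \<in> Kset n q'" by (rule DA2[OF K_subspace[OF ds(3)]])
  then have "p' h = 0" using ds(5)[OF hd] by (simp add: Kset_def)
  then have "h = zvec" using A hd by (simp add: aniso_iff)
  then show False using h(2) by simp
qed

lemma IsoL:
  assumes "iso_map n1 q1 q1' n2 q2 q2' L" "u \<in> LL n1 q1'"
  shows "L u \<in> LL n2 q2'"
proof -
  have lin: "linear_on n1 L" and bij: "bij_betw L (vecs n1) (vecs n2)"
    and dd: "\<forall>g\<in>vecs n2. q1' (dual_map n1 n2 L g) = q2' g"
    using assms(1) by (auto simp: iso_map_def)
  have un: "u \<in> vecs n1" using assms(2) by (rule LL_vecs)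
  have Lu: "L u \<in> vecs n2" using bij un bij_betwE by blast
  show ?thesis
  proof (rule annihilatorI[OF Lu])
    fix h assume h: "h \<in> Kset n2 q2'"
    have "dual_map n1 n2 L h \<in> Kset n1 q1'" using h dd by (simp add: Kset_def)
    then have "pairing n1 u (dual_map n1 n2 L h) = 0" using assms(2) by (rule annihilatorD[rotated])
    then have "pairing n1 (dual_map n1 n2 L h) u = 0" by (simp add: pairing_comm)
    then have "pairing n2 h (L u) = 0" using adjoint[OF lin un] by simp
    then show "pairing n2 (L u) h = 0" by (simp add: pairing_comm)
  qed
qed

lemma iso_map_simps:
  assumes "iso_map n1 q1 q1' n2 q2 q2' L"
  shows "linear_on n1 L" "\<And>x. x \<in> vecs n1 \<Longrightarrow> L x \<in> vecs n2"
    "\<And>x. x \<in> vecs n1 \<Longrightarrow> q2 (L x) = q1 x"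
    "\<And>g. g \<in> vecs n2 \<Longrightarrow> q1' (dual_map n1 n2 L g) = q2' g"
    "bij_betw L (vecs n1) (vecs n2)"
  using assms bij_betwE unfolding iso_map_def by blast+

lemma core:
  assumes C2: "CHAR('a::field) = 2"
    and D1: "decomp d1 p1 p1' n1 q1 q1'" and A1: "anisotropic (d1, p1, (p1'::'a vec \<Rightarrow> 'a))"
    and D2: "decomp d2 p2 p2' n2 q2 q2'" and A2: "anisotropic (d2, p2, p2')"
    and I: "iso_map n1 q1 q1' n2 q2 q2' \<psi>"
  shows "isometric (d1, p1, p1') (d2, p2, p2')"
proof -
  note d1s = decomp_simps[OF D1] and d2s = decomp_simps[OF D2] and ism = iso_map_simps[OF I]
  have a1: "\<And>x. x \<in> vecs d1 \<Longrightarrow> p1 x = 0 \<Longrightarrow> x = zvec" "\<And>x. x \<in> vecs d1 \<Longrightarrow> p1' x = 0 \<Longrightarrow> x = zvec"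
    using A1 by (auto simp: aniso_iff)
  have a2: "\<And>x. x \<in> vecs d2 \<Longrightarrow> p2 x = 0 \<Longrightarrow> x = zvec" "\<And>x. x \<in> vecs d2 \<Longrightarrow> p2' x = 0 \<Longrightarrow> x = zvec"
    using A2 by (auto simp: aniso_iff)
  have p1z: "p1 zvec = 0" using d1s(2,4) ts_zero[of n1 q1] by (metis zvec_vecs)
  have p2z: "p2 zvec = 0" using d2s(2,4) ts_zero[of n2 q2] by (metis zvec_vecs)
  define \<theta> where "\<theta> = (\<lambda>u0. first_part d2 (\<psi> (SOME u. u \<in> LL n1 q1' \<and> first_part d1 u = u0)))"
  have WD: "\<theta> (first_part d1 u) = first_part d2 (\<psi> u)" if u: "u \<in> LL n1 q1'" for u
  proof -
    define v where "v = (SOME v. v \<in> LL n1 q1' \<and> first_part d1 v = first_part d1 u)"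
    have "\<exists>v. v \<in> LL n1 q1' \<and> first_part d1 v = first_part d1 u" using u by blast
    then have "v \<in> LL n1 q1' \<and> first_part d1 v = first_part d1 u" unfolding v_def by (rule someI_ex)
    then have v: "v \<in> LL n1 q1'" "first_part d1 v = first_part d1 u" by auto
    define w where "w = vadd v (smul (-1) u)"
    have wL: "w \<in> LL n1 q1'" unfolding w_def using LL_closed v(1) u by blast
    have fw: "first_part d1 w = zvec" using v(2) unfolding w_def first_part_vadd first_part_smul
      by (simp add: fun_eq_iff)
    have "q1 w = 0" using Proj[OF D1 wL] fw p1z by simp
    then have "q2 (\<psi> w) = 0" using ism(3)[OF LL_vecs[OF wL]] by simp
    then have "p2 (first_part d2 (\<psi> w)) = 0" using Proj[OF D2 IsoL[OF I wL]] by simp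
    then have "first_part d2 (\<psi> w) = zvec" using a2(1)[OF first_part_vecs] by blast
    moreover have "\<psi> w = vadd (\<psi> v) (smul (-1) (\<psi> u))"
      unfolding w_def using lin_add[OF ism(1)] lin_smul[OF ism(1)] LL_vecs[OF v(1)] LL_vecs[OF u] smul_vecs
      by metis
    ultimately have "vadd (first_part d2 (\<psi> v)) (smul (-1) (first_part d2 (\<psi> u))) = zvec"
      by (simp add: first_part_vadd first_part_smul)
    then have "first_part d2 (\<psi> v) = first_part d2 (\<psi> u)" by (rule vsub_eq)
    then show ?thesis by (simp add: \<theta>_def v_def)
  qed
  have surj1: "\<And>x. x \<in> vecs d1 \<Longrightarrow> \<exists>u\<in>LL n1 q1'. first_part d1 u = x" using Surj[OF D1 A1] by blast
  have lin: "linear_on d1 \<theta>"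
    unfolding linear_on_def
  proof (intro conjI ballI allI)
    fix x y :: "'a vec" assume x: "x \<in> vecs d1" and y: "y \<in> vecs d1"
    obtain u where u: "u \<in> LL n1 q1'" "first_part d1 u = x" using surj1[OF x] by blast
    obtain v where v: "v \<in> LL n1 q1'" "first_part d1 v = y" using surj1[OF y] by blast
    have "\<theta> (vadd x y) = \<theta> (first_part d1 (vadd u v))" using u v by (simp add: first_part_vadd)
    also have "\<dots> = first_part d2 (\<psi> (vadd u v))" by (rule WD[OF LL_closed(1)[OF u(1) v(1)]])
    also have "\<dots> = vadd (first_part d2 (\<psi> u)) (first_part d2 (\<psi> v))"
      using lin_add[OF ism(1) LL_vecs[OF u(1)] LL_vecs[OF v(1)]] by (simp add: first_part_vadd)
    also have "\<dots> = vadd (\<theta> x) (\<theta> y)" using WD[OF u(1)] WD[OF v(1)] u(2) v(2) by simp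
    finally show "\<theta> (vadd x y) = vadd (\<theta> x) (\<theta> y)" .
  next
    fix c and x :: "'a vec" assume x: "x \<in> vecs d1"
    obtain u where u: "u \<in> LL n1 q1'" "first_part d1 u = x" using surj1[OF x] by blast
    have "\<theta> (smul c x) = \<theta> (first_part d1 (smul c u))" using u by (simp add: first_part_smul)
    also have "\<dots> = first_part d2 (\<psi> (smul c u))" by (rule WD[OF LL_closed(2)[OF u(1) u(1)]])
    also have "\<dots> = smul c (first_part d2 (\<psi> u))"
      using lin_smul[OF ism(1) LL_vecs[OF u(1)]] by (simp add: first_part_smul)
    also have "\<dots> = smul c (\<theta> x)" using WD[OF u(1)] u(2) by simp
    finally show "\<theta> (smul c x) = smul c (\<theta> x)" .
  qed
  have qq: "p2 (\<theta> x) = p1 x" if x: "x \<in> vecs d1" for x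
  proof -
    obtain u where u: "u \<in> LL n1 q1'" "first_part d1 u = x" using surj1[OF x] by blast
    have "p2 (\<theta> x) = p2 (first_part d2 (\<psi> u))" using WD[OF u(1)] u(2) by simp
    also have "\<dots> = q2 (\<psi> u)" using Proj[OF D2 IsoL[OF I u(1)]] by simp
    also have "\<dots> = q1 u" by (rule ism(3)[OF LL_vecs[OF u(1)]])
    also have "\<dots> = p1 x" using Proj[OF D1 u(1)] u(2) by simp
    finally show ?thesis .
  qed
  have inj: "inj_on \<theta> (vecs d1)"
  proof (rule inj_onI)
    fix x y assume x: "x \<in> vecs d1" and y: "y \<in> vecs d1" and e: "\<theta> x = \<theta> y"
    have z: "vadd x (smul (-1) y) \<in> vecs d1" using x y by blast
    have "\<theta> (vadd x (smul (-1) y)) = vadd (\<theta> x) (smul (-1) (\<theta> y))"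
      using lin_add[OF lin x smul_vecs[OF y]] lin_smul[OF lin y] by simp
    also have "\<dots> = zvec" using e by (simp add: fun_eq_iff)
    finally have "p1 (vadd x (smul (-1) y)) = 0" using qq[OF z] p2z by simp
    then have "vadd x (smul (-1) y) = zvec" using a1(1)[OF z] by blast
    then show "x = y" by (rule vsub_eq)
  qed
  have img: "\<theta> ` vecs d1 = vecs d2"
  proof
    show "\<theta> ` vecs d1 \<subseteq> vecs d2" unfolding \<theta>_def by auto
  next
    show "vecs d2 \<subseteq> \<theta> ` vecs d1"
    proof
      fix y :: "'a vec" assume y: "y \<in> vecs d2"
      obtain u' where u': "u' \<in> LL n2 q2'" "first_part d2 u' = y" using Surj[OF D2 A2 y] by blast
      let ?\<psi>' = "inv_into (vecs n1) \<psi>"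
      have I': "iso_map n2 q2 q2' n1 q1 q1' ?\<psi>'" by (rule iso_map_inv[OF I])
      have uL: "?\<psi>' u' \<in> LL n1 q1'" by (rule IsoL[OF I' u'(1)])
      have "\<psi> (?\<psi>' u') = u'" using bij_betw_inv_into_right[OF ism(5) LL_vecs[OF u'(1)]] .
      then have "\<theta> (first_part d1 (?\<psi>' u')) = y" using WD[OF uL] u'(2) by simp
      then show "y \<in> \<theta> ` vecs d1" by (metis first_part_vecs image_eqI)
    qed
  qed
  have bij: "bij_betw \<theta> (vecs d1) (vecs d2)" using inj img by (simp add: bij_betw_def)
  have dd: "p1' (dual_map d1 d2 \<theta> g) = p2' g" if g: "g \<in> vecs d2" for g
  proof -
    define G where "G = dual_map d1 d2 \<theta> g"
    define H where "H = dual_map n1 n2 \<psi> g"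
    have Gd: "G \<in> vecs d1" unfolding G_def by simp
    have Gn: "G \<in> vecs n1" using vecs_mono[OF Gd d1s(1)] .
    have Hn: "H \<in> vecs n1" unfolding H_def by simp
    have gn: "g \<in> vecs n2" using vecs_mono[OF g d2s(1)] .
    have pe: "pairing n1 G u = pairing n1 H u" if u: "u \<in> LL n1 q1'" for u
    proof -
      have un: "u \<in> vecs n1" using LL_vecs[OF u] .
      have "pairing n1 G u = pairing d1 G u" by (rule pairing_vecs_le[OF Gd d1s(1)])
      also have "\<dots> = pairing d1 G (first_part d1 u)" by (simp add: pairing_first_part)
      also have "\<dots> = pairing d2 g (\<theta> (first_part d1 u))" unfolding G_def
        by (rule adjoint[OF lin first_part_vecs, symmetric])
      also have "\<dots> = pairing d2 g (first_part d2 (\<psi> u))" using WD[OF u] by simp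
      also have "\<dots> = pairing d2 g (\<psi> u)" by (simp add: pairing_comm pairing_first_part)
      also have "\<dots> = pairing n2 g (\<psi> u)" by (rule pairing_vecs_le[OF g d2s(1), symmetric])
      also have "\<dots> = pairing n1 H u" unfolding H_def by (rule adjoint[OF ism(1) un])
      finally show ?thesis .
    qed
    define Df where "Df = vadd G (smul (-1) H)"
    have "Df \<in> annihilator n1 (LL n1 q1')"
    proof (rule annihilatorI)
      show "Df \<in> vecs n1" unfolding Df_def using Gn Hn by blast
      fix u assume u: "u \<in> LL n1 q1'"
      show "pairing n1 Df u = 0" unfolding Df_def pairing_vadd1 pairing_smul1 using pe[OF u] by simp
    qed
    then have "Df \<in> Kset n1 q1'" by (rule DA2[OF K_subspace[OF d1s(3)]])
    then have "q1' Df = 0" by (simp add: Kset_def)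
    moreover have "q1' Df = q1' G + q1' H"
      unfolding Df_def using ts_add[OF d1s(3) Gn smul_vecs[OF Hn]] ts_smul[OF d1s(3) Hn] by simp
    ultimately have "q1' G = q1' H" using char2_eq[OF C2] by simp
    moreover have "q1' G = p1' G" by (rule d1s(5)[OF Gd])
    moreover have "q1' H = q2' g" unfolding H_def by (rule ism(4)[OF gn])
    moreover have "q2' g = p2' g" by (rule d2s(5)[OF g])
    ultimately show ?thesis unfolding G_def by simp
  qed
  show ?thesis unfolding isometric_iff iso_map_def using lin bij qq dd by blast
qed

lemma metab_dim0:
  assumes M: "metabolic (n, q, q')" and S: "is_ssqs (n, q, q')"
    and D: "decomp d p p' m r r'" and A: "anisotropic (d, p, p')"
    and I: "isometric (n, q, q') (m, r, r')"
  shows "d = 0"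
proof (rule ccontr)
  assume d0: "d \<noteq> 0"
  obtain \<psi> where I': "iso_map m r r' n q q' \<psi>" using isometric_sym[OF I] unfolding isometric_iff by blast
  note ism = iso_map_simps[OF I']
  obtain W where W: "subspace_of n W" "\<forall>x\<in>W. q x = 0" "\<forall>f\<in>annihilator n W. q' f = 0"
    using M by (auto simp: metabolic_def)
  have u0: "unit_vec 0 \<in> vecs d" using d0 by (intro unit_vec_vecs) simp
  obtain u where u: "u \<in> LL m r'" "first_part d u = unit_vec 0" using Surj[OF D A u0] by blast
  have pu: "\<psi> u \<in> LL n q'" by (rule IsoL[OF I' u(1)])
  have "\<psi> u \<in> annihilator n (annihilator n W)"
  proof (rule annihilatorI)
    show "\<psi> u \<in> vecs n" using pu by (rule LL_vecs)
    fix f assume f: "f \<in> annihilator n W"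
    have "f \<in> Kset n q'" using f W(3) annihilator_vecs[OF f] by (simp add: Kset_def)
    then show "pairing n (\<psi> u) f = 0" using pu by (rule annihilatorD[rotated])
  qed
  then have "\<psi> u \<in> W" by (rule DA2[OF W(1)])
  then have "q (\<psi> u) = 0" using W(2) by blast
  then have "r u = 0" using ism(3)[OF LL_vecs[OF u(1)]] by simp
  then have "p (unit_vec 0) = 0" using Proj[OF D u(1)] u(2) by simp
  moreover have "\<forall>x\<in>vecs d. p x = 0 \<longrightarrow> x = zvec" using A by (simp add: aniso_iff)
  ultimately have "unit_vec 0 = (zvec::'a vec)" using u0 by blast
  then have "unit_vec 0 (0::nat) = (zvec::'a vec) 0" by simp
  then show False by (simp add: unit_vec_def)
qed

lemma dual_map_id: "g \<in> vecs n \<Longrightarrow> dual_map n n id g = (g::'a::field vec)"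
  by (rule vecs_ext[OF dual_map_vecs]) (auto simp: dual_map_unit pairing_unit2)

lemma iso_id:
  assumes "\<forall>x\<in>vecs n. q2 x = q1 x" "\<forall>g\<in>vecs n. q2' g = q1' g"
  shows "isometric (n, q1, q1') (n, q2, (q2' :: 'a::field vec \<Rightarrow> 'a))"
proof -
  have "\<forall>g\<in>vecs n. q1' (dual_map n n id g) = q2' g"
  proof
    fix g :: "'a vec" assume g: "g \<in> vecs n"
    have "q1' (dual_map n n id g) = q1' g" using dual_map_id[OF g] by (rule arg_cong)
    then show "q1' (dual_map n n id g) = q2' g" using assms(2) g by simp
  qed
  then have "iso_map n q1 q1' n q2 q2' id"
    unfolding iso_map_def linear_on_def using assms by (auto simp: bij_betw_def)
  then show ?thesis unfolding isometric_iff by blast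
qed

lemma isometric_refl: "isometric S (S::'a::field ssqs)"
  by (cases S) (auto intro: iso_id)

lemma pullback:
  assumes S: "is_ssqs (n, q, q')" and lin: "linear_on n L" "linear_on n Li"
    and inv: "\<And>x. x \<in> vecs n \<Longrightarrow> L x \<in> vecs n" "\<And>x. x \<in> vecs n \<Longrightarrow> Li x \<in> vecs n"
      "\<And>x. x \<in> vecs n \<Longrightarrow> L (Li x) = x" "\<And>x. x \<in> vecs n \<Longrightarrow> Li (L x) = (x::'a::field vec)"
  shows "is_ssqs (n, q \<circ> L, q' \<circ> dual_map n n Li) \<and> isometric (n, q, q') (n, q \<circ> L, q' \<circ> dual_map n n Li)"
proof
  have tq: "totally_singular n q" and tq': "totally_singular n q'" using S by (auto simp: is_ssqs_def)
  have t1: "totally_singular n (q \<circ> L)"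
    unfolding totally_singular_def
    using lin_smul[OF lin(1)] lin_add[OF lin(1)] ts_smul[OF tq] ts_add[OF tq] inv(1) by simp
  have t2: "totally_singular n (q' \<circ> dual_map n n Li)"
    unfolding totally_singular_def
  proof (intro conjI allI ballI)
    fix c and x :: "'a vec"
    show "(q' \<circ> dual_map n n Li) (smul c x) = c\<^sup>2 * (q' \<circ> dual_map n n Li) x"
      unfolding comp_apply dual_map_smul by (rule ts_smul[OF tq' dual_map_vecs])
  next
    fix x y :: "'a vec"
    show "(q' \<circ> dual_map n n Li) (vadd x y) = (q' \<circ> dual_map n n Li) x + (q' \<circ> dual_map n n Li) y"
      unfolding comp_apply dual_map_vadd by (rule ts_add[OF tq' dual_map_vecs dual_map_vecs])
  qed
  show "is_ssqs (n, q \<circ> L, q' \<circ> dual_map n n Li)" using t1 t2 by (simp add: is_ssqs_def)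
  have bij: "bij_betw Li (vecs n) (vecs n)"
    by (rule bij_betw_byWitness[where f'=L]) (use inv in auto)
  have "iso_map n q q' n (q \<circ> L) (q' \<circ> dual_map n n Li) Li"
    unfolding iso_map_def using lin(2) bij inv by simp
  then show "isometric (n, q, q') (n, q \<circ> L, q' \<circ> dual_map n n Li)" unfolding isometric_iff by blast
qed

definition join :: "nat \<Rightarrow> 'a vec \<Rightarrow> 'a vec \<Rightarrow> 'a vec" where
  "join n a b = (\<lambda>i. if i < n then a i else b (i - n))"

lemma join_vecs: "(b::'a::zero vec) \<in> vecs k \<Longrightarrow> join n a b \<in> vecs (n + k)"
  by (simp add: join_def vecs_def)
lemma first_join: "(a::'a::zero vec) \<in> vecs n \<Longrightarrow> first_part n (join n a b) = a"
  by (simp add: join_def vecs_def fun_eq_iff first_part_apply)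
lemma second_join: "second_part n (join n a b) = b"
  by (simp add: join_def fun_eq_iff second_part_apply)
lemma join_split: "(x::'a::zero vec) \<in> vecs (n + k) \<Longrightarrow> join n (first_part n x) (second_part n x) = x"
  by (simp add: join_def fun_eq_iff second_part_apply first_part_apply)
lemma join_vadd: "join n (vadd a b) (vadd c d) = vadd (join n a c) (join n b (d::'a::field vec))"
  by (simp add: join_def fun_eq_iff)
lemma join_smul: "join n (smul t a) (smul t c) = smul t (join n a (c::'a::field vec))"
  by (simp add: join_def fun_eq_iff)

lemma pairing_join: "pairing (n + k) g (join n a b) = pairing n g a + pairing k (second_part n g) (b::'a::field vec)"
proof (induction k)
  case 0 then show ?case by (simp add: pairing_def join_def)
next
  case (Suc k)
  have "pairing (n + Suc k) g (join n a b) = pairing (n + k) g (join n a b) + g (n + k) * join n a b (n + k)"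
    using pairing_Suc[of "n+k"] by simp
  then show ?case using Suc by (simp add: pairing_Suc join_def second_part_apply add.commute)
qed

lemma orth_sum_iso:
  assumes I: "iso_map n1 q1 q1' n2 q2 q2' L"
  shows "isometric (orth_sum (n1, q1, q1') (k, r, r')) (orth_sum (n2, q2, q2') (k, r, (r'::'a::field vec \<Rightarrow> 'a)))"
proof -
  let ?Li = "inv_into (vecs n1) L"
  have I': "iso_map n2 q2 q2' n1 q1 q1' ?Li" by (rule iso_map_inv[OF I])
  note ism = iso_map_simps[OF I] and ism' = iso_map_simps[OF I']
  have LLi: "\<And>y. y \<in> vecs n2 \<Longrightarrow> L (?Li y) = y" using ism(5) bij_betw_inv_into_right by fast
  have LiL: "\<And>x. x \<in> vecs n1 \<Longrightarrow> ?Li (L x) = x" using ism(5) bij_betw_inv_into_left by fast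
  define L' where "L' = (\<lambda>x. join n2 (L (first_part n1 x)) (second_part n1 x))"
  define Li' where "Li' = (\<lambda>y. join n1 (?Li (first_part n2 y)) (second_part n2 y))"
  have L'v: "L' x \<in> vecs (n2 + k)" if "x \<in> vecs (n1 + k)" for x
    unfolding L'_def by (rule join_vecs[OF second_part_vecs[OF that]])
  have Li'v: "Li' y \<in> vecs (n1 + k)" if "y \<in> vecs (n2 + k)" for y
    unfolding Li'_def by (rule join_vecs[OF second_part_vecs[OF that]])
  have fL': "first_part n2 (L' x) = L (first_part n1 x)" for x
    unfolding L'_def by (rule first_join[OF ism(2)[OF first_part_vecs]])
  have sL': "second_part n2 (L' x) = second_part n1 x" for x
    unfolding L'_def by (rule second_join)
  have fLi': "first_part n1 (Li' y) = ?Li (first_part n2 y)" for y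
    unfolding Li'_def by (rule first_join[OF ism'(2)[OF first_part_vecs]])
  have sLi': "second_part n1 (Li' y) = second_part n2 y" for y
    unfolding Li'_def by (rule second_join)
  have lin: "linear_on (n1 + k) L'"
    unfolding linear_on_def
  proof (intro conjI ballI allI)
    fix x y :: "'a vec" assume "x \<in> vecs (n1+k)" "y \<in> vecs (n1+k)"
    show "L' (vadd x y) = vadd (L' x) (L' y)"
      unfolding L'_def first_part_vadd second_part_vadd lin_add[OF ism(1) first_part_vecs first_part_vecs] join_vadd ..
  next
    fix c and x :: "'a vec" assume "x \<in> vecs (n1+k)"
    show "L' (smul c x) = smul c (L' x)"
      unfolding L'_def first_part_smul second_part_smul lin_smul[OF ism(1) first_part_vecs] join_smul ..
  qed
  have bij: "bij_betw L' (vecs (n1 + k)) (vecs (n2 + k))"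
  proof (rule bij_betw_byWitness[where f'=Li'])
    show "\<forall>x\<in>vecs (n1 + k). Li' (L' x) = x"
    proof
      fix x :: "'a vec" assume x: "x \<in> vecs (n1 + k)"
      have "Li' (L' x) = join n1 (first_part n1 x) (second_part n1 x)"
        unfolding Li'_def fL' sL' using LiL[OF first_part_vecs] by simp
      then show "Li' (L' x) = x" using join_split[OF x] by simp
    qed
    show "\<forall>y\<in>vecs (n2 + k). L' (Li' y) = y"
    proof
      fix y :: "'a vec" assume y: "y \<in> vecs (n2 + k)"
      have "L' (Li' y) = join n2 (first_part n2 y) (second_part n2 y)"
        unfolding L'_def fLi' sLi' using LLi[OF first_part_vecs] by simp
      then show "L' (Li' y) = y" using join_split[OF y] by simp
    qed
    show "L' ` vecs (n1 + k) \<subseteq> vecs (n2 + k)" using L'v by blast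
    show "Li' ` vecs (n2 + k) \<subseteq> vecs (n1 + k)" using Li'v by blast
  qed
  have qq: "q2 (first_part n2 (L' x)) + r (second_part n2 (L' x)) = q1 (first_part n1 x) + r (second_part n1 x)" for x
    unfolding fL' sL' using ism(3)[OF first_part_vecs] by simp
  have dual: "dual_map (n1 + k) (n2 + k) L' g = join n1 (dual_map n1 n2 L (first_part n2 g)) (second_part n2 g)"
    if g: "g \<in> vecs (n2 + k)" for g
  proof (rule vecs_ext[OF dual_map_vecs join_vecs[OF second_part_vecs[OF g]]])
    fix j assume j: "j < n1 + k"
    have "dual_map (n1 + k) (n2 + k) L' g j = pairing (n2 + k) g (L' (unit_vec j))" by (rule dual_map_unit[OF j])
    also have "\<dots> = pairing n2 g (L (first_part n1 (unit_vec j))) + pairing k (second_part n2 g) (second_part n1 (unit_vec j))"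
      unfolding L'_def by (rule pairing_join)
    also have "\<dots> = join n1 (dual_map n1 n2 L (first_part n2 g)) (second_part n2 g) j"
    proof (cases "j < n1")
      case True
      have "first_part n1 (unit_vec j) = (unit_vec j :: 'a vec)" using True by (intro first_part_id unit_vec_vecs)
      moreover have "second_part n1 (unit_vec j) = (zvec :: 'a vec)" using True by (intro second_part_small unit_vec_vecs)
      ultimately show ?thesis using True
        by (simp add: join_def dual_map_unit pairing_comm[of n2 g] pairing_comm[of n2 "first_part n2 g"] pairing_first_part)
    next
      case False
      have "first_part n1 (unit_vec j) = (zvec :: 'a vec)" using False by (simp add: fun_eq_iff first_part_apply unit_vec_def)
      moreover have "second_part n1 (unit_vec j) = (unit_vec (j - n1) :: 'a vec)" using False
        by (auto simp: fun_eq_iff second_part_apply unit_vec_def)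
      moreover have "j - n1 < k" using False j by simp
      ultimately show ?thesis using False lin_zero[OF ism(1)]
        by (simp add: join_def pairing_unit2 second_part_apply)
    qed
    finally show "dual_map (n1 + k) (n2 + k) L' g j = join n1 (dual_map n1 n2 L (first_part n2 g)) (second_part n2 g) j" .
  qed
  have dd: "q1' (first_part n1 (dual_map (n1 + k) (n2 + k) L' g)) + r' (second_part n1 (dual_map (n1 + k) (n2 + k) L' g))
      = q2' (first_part n2 g) + r' (second_part n2 g)" if g: "g \<in> vecs (n2 + k)" for g
    unfolding dual[OF g] first_join[OF dual_map_vecs] second_join using ism(4)[OF first_part_vecs] by simp
  have "iso_map (n1 + k) (\<lambda>x. q1 (first_part n1 x) + r (second_part n1 x)) (\<lambda>f. q1' (first_part n1 f) + r' (second_part n1 f))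
     (n2 + k) (\<lambda>x. q2 (first_part n2 x) + r (second_part n2 x)) (\<lambda>f. q2' (first_part n2 f) + r' (second_part n2 f)) L'"
    unfolding iso_map_def using lin bij qq dd by simp
  then show ?thesis unfolding orth_sum_eq isometric_iff by blast
qed

lemma ts_mono:
  assumes "totally_singular n Q" "m \<le> n" shows "totally_singular m Q"
  unfolding totally_singular_def
proof (intro conjI allI ballI)
  fix c and x :: "'a::field vec" assume "x \<in> vecs m"
  then have "x \<in> vecs n" using assms(2) by (rule vecs_mono)
  then show "Q (smul c x) = c^2 * Q x" by (rule ts_smul[OF assms(1)])
next
  fix x y :: "'a::field vec" assume "x \<in> vecs m" "y \<in> vecs m"
  then have "x \<in> vecs n" "y \<in> vecs n" using assms(2) by (auto intro: vecs_mono)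
  then show "Q (vadd x y) = Q x + Q y" by (rule ts_add[OF assms(1)])
qed

lemma split_last:
  assumes S: "is_ssqs (Suc m, q, q')" and z: "q (unit_vec m) = 0 \<or> q' (unit_vec m) = (0::'a::field)"
  shows "\<exists>S' \<mu>. is_ssqs S' \<and> dim S' = m \<and> is_ssqs \<mu> \<and> dim \<mu> = 1 \<and> metabolic \<mu> \<and>
           isometric (Suc m, q, q') (orth_sum S' \<mu>)"
proof -
  have tq: "totally_singular (Suc m) q" and tq': "totally_singular (Suc m) q'" using S by (auto simp: is_ssqs_def)
  define emb :: "'a vec \<Rightarrow> 'a vec" where "emb z = smul (z 0) (unit_vec m)" for z
  have embv: "emb z \<in> vecs (Suc m)" for z unfolding emb_def by (intro smul_vecs unit_vec_vecs) simp
  have emb_smul: "emb (smul c z) = smul c (emb z)" for c z unfolding emb_def by (simp add: fun_eq_iff)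
  have emb_vadd: "emb (vadd z w) = vadd (emb z) (emb w)" for z w unfolding emb_def by (simp add: fun_eq_iff algebra_simps)
  have ts_emb: "totally_singular 1 (Q \<circ> emb)" if tQ: "totally_singular (Suc m) Q" for Q
    unfolding totally_singular_def
  proof (intro conjI allI ballI)
    fix c and x :: "'a vec"
    show "(Q \<circ> emb) (smul c x) = c\<^sup>2 * (Q \<circ> emb) x"
      unfolding comp_apply emb_smul by (rule ts_smul[OF tQ embv])
  next
    fix x y :: "'a vec"
    show "(Q \<circ> emb) (vadd x y) = (Q \<circ> emb) x + (Q \<circ> emb) y"
      unfolding comp_apply emb_vadd by (rule ts_add[OF tQ embv embv])
  qed
  have embq: "Q (emb z) = (z 0)^2 * Q (unit_vec m)" if tQ: "totally_singular (Suc m) Q" for Q z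
    unfolding emb_def by (rule ts_smul[OF tQ unit_vec_vecs]) simp
  define S' where "S' = (m, q, q')"
  define \<mu> where "\<mu> = (1::nat, q \<circ> emb, q' \<circ> emb)"
  have S'ss: "is_ssqs S'" unfolding S'_def is_ssqs_def using ts_mono[OF tq] ts_mono[OF tq'] by simp
  have \<mu>ss: "is_ssqs \<mu>" unfolding \<mu>_def is_ssqs_def using ts_emb tq tq' by simp
  have met: "metabolic \<mu>"
    using z
  proof
    assume qz: "q (unit_vec m) = 0"
    have sub: "subspace_of 1 (vecs 1 :: 'a vec set)" by (auto simp: subspace_of_def)
    have a: "\<forall>x\<in>vecs 1. (q \<circ> emb) x = 0" using embq[OF tq] qz by simp
    have b: "\<forall>f\<in>annihilator 1 (vecs 1). (q' \<circ> emb) f = 0"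
    proof
      fix f :: "'a vec" assume f: "f \<in> annihilator 1 (vecs 1)"
      have "pairing 1 f (unit_vec 0) = 0" using f by (rule annihilatorD) (rule unit_vec_vecs, simp)
      then have "f 0 = 0" by (simp add: pairing_unit2)
      then show "(q' \<circ> emb) f = 0" using embq[OF tq'] by simp
    qed
    show ?thesis unfolding metabolic_def \<mu>_def using sub a b by auto
  next
    assume qz: "q' (unit_vec m) = 0"
    have sub: "subspace_of 1 {zvec :: 'a vec}" by (auto simp: subspace_of_def fun_eq_iff)
    have a: "\<forall>x\<in>{zvec}. (q \<circ> emb) x = 0" using embq[OF tq] by simp
    have b: "\<forall>f\<in>annihilator 1 {zvec}. (q' \<circ> emb) f = 0" using embq[OF tq'] qz by simp
    show ?thesis unfolding metabolic_def \<mu>_def using sub a b by auto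
  qed
  have e1: "\<forall>x\<in>vecs (Suc m). q (first_part m x) + (q \<circ> emb) (second_part m x) = q x"
  proof
    fix x :: "'a vec" assume x: "x \<in> vecs (Suc m)"
    have "x = vadd (first_part m x) (emb (second_part m x))"
      using first_part_Suc[of m x] first_part_id[OF x] by (simp add: emb_def second_part_apply)
    then have "q x = q (first_part m x) + q (emb (second_part m x))"
      using ts_add[OF tq vecs_mono[OF first_part_vecs] embv] by (metis le_SucI order_refl)
    then show "q (first_part m x) + (q \<circ> emb) (second_part m x) = q x" by simp
  qed
  have e2: "\<forall>x\<in>vecs (Suc m). q' (first_part m x) + (q' \<circ> emb) (second_part m x) = q' x"
  proof
    fix x :: "'a vec" assume x: "x \<in> vecs (Suc m)"
    have "x = vadd (first_part m x) (emb (second_part m x))"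
      using first_part_Suc[of m x] first_part_id[OF x] by (simp add: emb_def second_part_apply)
    then have "q' x = q' (first_part m x) + q' (emb (second_part m x))"
      using ts_add[OF tq' vecs_mono[OF first_part_vecs] embv] by (metis le_SucI order_refl)
    then show "q' (first_part m x) + (q' \<circ> emb) (second_part m x) = q' x" by simp
  qed
  have "isometric (Suc m, q, q') (orth_sum S' \<mu>)"
    unfolding S'_def \<mu>_def orth_sum_eq using iso_id[of "Suc m" _ q _ q'] e1 e2 by simp
  then show ?thesis using S'ss \<mu>ss met by (auto simp: S'_def \<mu>_def dim_def)
qed

definition tau :: "nat \<Rightarrow> nat \<Rightarrow> nat \<Rightarrow> nat" where
  "tau k m j = (if j = k then m else if j = m then k else j)"

lemma tau_tau: "tau k m (tau k m j) = j" by (simp add: tau_def)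
lemma tau_lt: "k < n \<Longrightarrow> m < n \<Longrightarrow> (tau k m j < n) = (j < n)" by (auto simp: tau_def)

definition Pm :: "nat \<Rightarrow> nat \<Rightarrow> 'a vec \<Rightarrow> 'a vec" where
  "Pm k m z = (\<lambda>j. z (tau k m j))"

lemma Pm_Pm: "Pm k m (Pm k m z) = z" by (simp add: Pm_def tau_tau)
lemma Pm_vecs: "k < n \<Longrightarrow> m < n \<Longrightarrow> z \<in> vecs n \<Longrightarrow> Pm k m z \<in> vecs n"
  unfolding vecs_def Pm_def using tau_lt[of k n m] by (simp add: not_less[symmetric])
lemma Pm_lin: "linear_on n (Pm k m :: 'a::field vec \<Rightarrow> 'a vec)"
  by (simp add: linear_on_def Pm_def fun_eq_iff)

lemma pairing_Pm:
  assumes "k < n" "m < n" shows "pairing n (Pm k m a) (Pm k m b) = pairing n a (b::'a::field vec)"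
proof -
  have bij: "bij_betw (tau k m) {..<n} {..<n}"
    by (rule bij_betw_byWitness[where f'="tau k m"]) (use assms tau_lt[OF assms] in \<open>auto simp: tau_tau\<close>)
  have "pairing n (Pm k m a) (Pm k m b) = (\<Sum>i<n. (\<lambda>j. a j * b j) (tau k m i))"
    by (simp add: pairing_def Pm_def)
  also have "\<dots> = (\<Sum>i<n. a i * b i)" by (rule sum.reindex_bij_betw[OF bij])
  finally show ?thesis by (simp add: pairing_def)
qed

lemma Pm_unit: "Pm k m (unit_vec j) = unit_vec (tau k m j)"
  by (auto simp: Pm_def unit_vec_def fun_eq_iff tau_def)

lemma nonzero_coord:
  assumes "x \<in> vecs n" "x \<noteq> zvec" shows "\<exists>k<n. x k \<noteq> (0::'a::zero)"
proof (rule ccontr)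
  assume "\<not> (\<exists>k<n. x k \<noteq> 0)"
  then have "x = zvec" using assms(1) by (intro vecs_ext[OF assms(1) zvec_vecs]) auto
  then show False using assms(2) by simp
qed

lemma stepA:
  assumes S: "is_ssqs (Suc m, Q, Q')" and y: "y \<in> vecs (Suc m)" "y m \<noteq> 0" "Q y = (0::'a::field)"
  shows "\<exists>Q2 Q2'. is_ssqs (Suc m, Q2, Q2') \<and> isometric (Suc m, Q, Q') (Suc m, Q2, Q2') \<and> Q2 (unit_vec m) = 0"
proof -
  define L :: "'a vec \<Rightarrow> 'a vec" where "L z = vadd (first_part m z) (smul (z m) y)" for z
  define Li :: "'a vec \<Rightarrow> 'a vec" where
    "Li w = vadd (first_part m w) (smul (w m / y m) (vadd (unit_vec m) (smul (-1) (first_part m y))))" for w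
  have ym: "\<And>j. j > m \<Longrightarrow> y j = 0" using y(1) by (simp add: vecs_def)
  have lin1: "linear_on (Suc m) L" unfolding linear_on_def L_def by (simp add: fun_eq_iff first_part_apply algebra_simps)
  have lin2: "linear_on (Suc m) Li" unfolding linear_on_def Li_def
    by (simp add: fun_eq_iff first_part_apply unit_vec_def algebra_simps add_divide_distrib)
  have v1: "L z \<in> vecs (Suc m)" if "z \<in> vecs (Suc m)" for z
    unfolding L_def by (intro vadd_vecs smul_vecs y(1) vecs_mono[OF first_part_vecs]) simp
  have v2: "Li z \<in> vecs (Suc m)" if "z \<in> vecs (Suc m)" for z
    unfolding Li_def by (intro vadd_vecs smul_vecs unit_vec_vecs vecs_mono[OF first_part_vecs]) simp_all
  have i1: "L (Li w) = w" if w: "w \<in> vecs (Suc m)" for w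
  proof (rule vecs_ext[OF v1[OF v2[OF w]] w])
    fix j assume j: "j < Suc m"
    show "L (Li w) j = w j"
      using j y(2) by (cases "j = m") (auto simp: L_def Li_def first_part_apply unit_vec_def field_simps)
  qed
  have i2: "Li (L z) = z" if z: "z \<in> vecs (Suc m)" for z
  proof (rule vecs_ext[OF v2[OF v1[OF z]] z])
    fix j assume j: "j < Suc m"
    show "Li (L z) j = z j"
      using j y(2) by (cases "j = m") (auto simp: L_def Li_def first_part_apply unit_vec_def field_simps)
  qed
  have P: "is_ssqs (Suc m, Q \<circ> L, Q' \<circ> dual_map (Suc m) (Suc m) Li) \<and>
     isometric (Suc m, Q, Q') (Suc m, Q \<circ> L, Q' \<circ> dual_map (Suc m) (Suc m) Li)"
    by (rule pullback[OF S lin1 lin2 v1 v2 i1 i2])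
  have "L (unit_vec m) = y" by (simp add: L_def fun_eq_iff first_part_apply unit_vec_def)
  then have "(Q \<circ> L) (unit_vec m) = 0" using y(3) by simp
  then show ?thesis using P by blast
qed

lemma stepB:
  assumes S: "is_ssqs (Suc m, Q, Q')" and g: "g \<in> vecs (Suc m)" "g m \<noteq> 0" "Q' g = (0::'a::field)"
  shows "\<exists>Q2 Q2'. is_ssqs (Suc m, Q2, Q2') \<and> isometric (Suc m, Q, Q') (Suc m, Q2, Q2') \<and> Q2' (unit_vec m) = 0"
proof -
  define Li :: "'a vec \<Rightarrow> 'a vec" where "Li y = vadd (first_part m y) (smul (pairing (Suc m) g y) (unit_vec m))" for y
  define L :: "'a vec \<Rightarrow> 'a vec" where
    "L z = vadd (first_part m z) (smul ((z m - pairing m g z) / g m) (unit_vec m))" for z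
  have pm_fp: "pairing m g (first_part m z) = pairing m g z" for z by (simp add: pairing_first_part)
  have pm_u: "pairing m g (unit_vec m) = 0" by (simp add: pairing_def unit_vec_def)
  have lin1: "linear_on (Suc m) L" unfolding linear_on_def L_def
    by (simp add: fun_eq_iff first_part_apply pairing_vadd2 pairing_smul2 algebra_simps add_divide_distrib diff_divide_distrib)
  have lin2: "linear_on (Suc m) Li" unfolding linear_on_def Li_def
    by (simp add: fun_eq_iff first_part_apply pairing_vadd2 pairing_smul2 algebra_simps)
  have v1: "L z \<in> vecs (Suc m)" if "z \<in> vecs (Suc m)" for z
    unfolding L_def by (intro vadd_vecs smul_vecs unit_vec_vecs vecs_mono[OF first_part_vecs]) simp_all
  have v2: "Li z \<in> vecs (Suc m)" if "z \<in> vecs (Suc m)" for z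
    unfolding Li_def by (intro vadd_vecs smul_vecs unit_vec_vecs vecs_mono[OF first_part_vecs]) simp_all
  have pL: "pairing m g (L z) = pairing m g z" for z
    unfolding L_def pairing_vadd2 pairing_smul2 pm_fp pm_u by simp
  have pLi: "pairing m g (Li z) = pairing m g z" for z
    unfolding Li_def pairing_vadd2 pairing_smul2 pm_fp pm_u by simp
  have Lm: "L z m = (z m - pairing m g z) / g m" for z by (simp add: L_def first_part_apply unit_vec_def)
  have Lim: "Li z m = pairing (Suc m) g z" for z by (simp add: Li_def first_part_apply unit_vec_def)
  have i1: "L (Li w) = w" if w: "w \<in> vecs (Suc m)" for w
  proof (rule vecs_ext[OF v1[OF v2[OF w]] w])
    fix j assume j: "j < Suc m"
    show "L (Li w) j = w j"
    proof (cases "j = m")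
      case True
      have "L (Li w) m = (pairing (Suc m) g w - pairing m g w) / g m" unfolding Lm Lim pLi ..
      also have "\<dots> = w m" using g(2) by (simp add: pairing_Suc)
      finally show ?thesis using True by simp
    next
      case False then show ?thesis using j by (simp add: L_def Li_def first_part_apply unit_vec_def)
    qed
  qed
  have i2: "Li (L z) = z" if z: "z \<in> vecs (Suc m)" for z
  proof (rule vecs_ext[OF v2[OF v1[OF z]] z])
    fix j assume j: "j < Suc m"
    show "Li (L z) j = z j"
    proof (cases "j = m")
      case True
      have "Li (L z) m = pairing m g z + g m * ((z m - pairing m g z) / g m)"
        unfolding Lim pairing_Suc pL Lm ..
      also have "\<dots> = z m" using g(2) by simp
      finally show ?thesis using True by simp
    next
      case False then show ?thesis using j by (simp add: L_def Li_def first_part_apply unit_vec_def)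
    qed
  qed
  have P: "is_ssqs (Suc m, Q \<circ> L, Q' \<circ> dual_map (Suc m) (Suc m) Li) \<and>
     isometric (Suc m, Q, Q') (Suc m, Q \<circ> L, Q' \<circ> dual_map (Suc m) (Suc m) Li)"
    by (rule pullback[OF S lin1 lin2 v1 v2 i1 i2])
  have "dual_map (Suc m) (Suc m) Li (unit_vec m) = g"
  proof (rule vecs_ext[OF dual_map_vecs g(1)])
    fix j assume j: "j < Suc m"
    have "dual_map (Suc m) (Suc m) Li (unit_vec m) j = pairing (Suc m) (unit_vec m) (Li (unit_vec j))"
      by (rule dual_map_unit[OF j])
    also have "\<dots> = Li (unit_vec j) m" by (simp add: pairing_unit1)
    also have "\<dots> = g j" unfolding Lim using j by (simp add: pairing_unit2)
    finally show "dual_map (Suc m) (Suc m) Li (unit_vec m) j = g j" .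
  qed
  then have "(Q' \<circ> dual_map (Suc m) (Suc m) Li) (unit_vec m) = 0" using g(3) by simp
  then show ?thesis using P by blast
qed

lemma iso_split:
  assumes S: "is_ssqs (n, q, q')" and I: "isotropic (n, q, (q'::'a::field vec \<Rightarrow> 'a))"
  shows "\<exists>S' \<mu>. is_ssqs S' \<and> dim S' < n \<and> is_ssqs \<mu> \<and> dim \<mu> = 1 \<and> metabolic \<mu> \<and>
           isometric (n, q, q') (orth_sum S' \<mu>)"
proof -
  have ex: "\<exists>x k. x \<in> vecs n \<and> k < n \<and> x k \<noteq> 0 \<and> (q x = 0 \<or> q' x = 0)"
    using I nonzero_coord unfolding isotropic_def by fastforce
  then obtain x k where xk: "x \<in> vecs n" "k < n" "x k \<noteq> 0" "q x = 0 \<or> q' x = 0" by blast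
  obtain m where n: "n = Suc m" using xk(2) by (cases n) auto
  have mn: "m < n" using n by simp
  let ?P = "Pm k m :: 'a vec \<Rightarrow> 'a vec"
  have Pv: "\<And>z. z \<in> vecs n \<Longrightarrow> ?P z \<in> vecs n" using Pm_vecs[OF xk(2) mn] by blast
  have PB: "is_ssqs (n, q \<circ> ?P, q' \<circ> dual_map n n ?P) \<and> isometric (n, q, q') (n, q \<circ> ?P, q' \<circ> dual_map n n ?P)"
    by (rule pullback[OF S Pm_lin Pm_lin Pv Pv]) (simp_all add: Pm_Pm)
  let ?y = "?P x"
  have yv: "?y \<in> vecs (Suc m)" using Pv[OF xk(1)] n by simp
  have ym: "?y m \<noteq> 0" using xk(3) by (simp add: Pm_def tau_def)
  have dPP: "dual_map n n ?P (?P x) = x"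
  proof (rule vecs_ext[OF dual_map_vecs xk(1)])
    fix j assume j: "j < n"
    have "dual_map n n ?P (?P x) j = pairing n (?P x) (?P (unit_vec j))" by (rule dual_map_unit[OF j])
    also have "\<dots> = pairing n x (unit_vec j)" by (rule pairing_Pm[OF xk(2) mn])
    also have "\<dots> = x j" by (rule pairing_unit2[OF j])
    finally show "dual_map n n ?P (?P x) j = x j" .
  qed
  have T1: "is_ssqs (Suc m, q \<circ> ?P, q' \<circ> dual_map n n ?P)" using PB n by simp
  obtain Q2 Q2' where T2: "is_ssqs (Suc m, Q2, Q2')"
      "isometric (Suc m, q \<circ> ?P, q' \<circ> dual_map n n ?P) (Suc m, Q2, Q2')"
      "Q2 (unit_vec m) = 0 \<or> Q2' (unit_vec m) = 0"
    using xk(4)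
  proof
    assume "q x = 0"
    then have "(q \<circ> ?P) ?y = 0" by (simp add: Pm_Pm)
    then show ?thesis using stepA[OF T1 yv ym] that by blast
  next
    assume "q' x = 0"
    then have "(q' \<circ> dual_map n n ?P) ?y = 0" using dPP by simp
    then show ?thesis using stepB[OF T1 yv ym] that by blast
  qed
  obtain S' \<mu> where F: "is_ssqs S'" "dim S' = m" "is_ssqs \<mu>" "dim \<mu> = 1" "metabolic \<mu>"
      "isometric (Suc m, Q2, Q2') (orth_sum S' \<mu>)"
    using split_last[OF T2(1) T2(3)] by blast
  have "isometric (n, q, q') (orth_sum S' \<mu>)"
    using isometric_trans[OF PB[THEN conjunct2] isometric_trans[OF T2(2)[folded n] F(6)[folded n]]] .
  then show ?thesis using F mn by blast
qed

lemma existence: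
  assumes "is_ssqs (S::'a::field ssqs)"
  shows "\<exists>\<phi> ms. is_ssqs \<phi> \<and> anisotropic \<phi> \<and> (\<forall>m\<in>set ms. is_ssqs m \<and> dim m = 1 \<and> metabolic m) \<and>
           isometric S (orth_sum_list \<phi> ms)"
  using assms
proof (induction "dim S" arbitrary: S rule: less_induct)
  case less
  obtain n q q' where S: "S = (n, q, q')" by (cases S) auto
  show ?case
  proof (cases "anisotropic S")
    case True
    have "orth_sum_list S [] = S" by (simp add: orth_sum_list_def)
    then have "is_ssqs S \<and> anisotropic S \<and> (\<forall>m\<in>set []. is_ssqs m \<and> dim m = 1 \<and> metabolic m) \<and>
           isometric S (orth_sum_list S [])" using less.prems isometric_refl[of S] True by simp
    then show ?thesis by blast
  next
    case False
    then have "isotropic (n, q, q')" using S by (simp add: anisotropic_def)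
    then obtain S' \<mu> where F: "is_ssqs S'" "dim S' < n" "is_ssqs \<mu>" "dim \<mu> = 1" "metabolic \<mu>"
        "isometric (n, q, q') (orth_sum S' \<mu>)"
      using iso_split less.prems S by blast
    have "dim S' < dim S" using F(2) S by (simp add: dim_def)
    then obtain \<phi> ms where IH: "is_ssqs \<phi>" "anisotropic \<phi>" "\<forall>m\<in>set ms. is_ssqs m \<and> dim m = 1 \<and> metabolic m"
        "isometric S' (orth_sum_list \<phi> ms)"
      using less.hyps[OF _ F(1)] by blast
    obtain n1 q1 q1' where S': "S' = (n1, q1, q1')" by (cases S') auto
    obtain n2 q2 q2' where R: "orth_sum_list \<phi> ms = (n2, q2, q2')" by (cases "orth_sum_list \<phi> ms") auto
    obtain k r r' where M: "\<mu> = (k, r, r')" by (cases \<mu>) auto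
    obtain L where "iso_map n1 q1 q1' n2 q2 q2' L" using IH(4) unfolding S' R isometric_iff by blast
    then have "isometric (orth_sum S' \<mu>) (orth_sum (orth_sum_list \<phi> ms) \<mu>)"
      unfolding S' R M by (rule orth_sum_iso)
    moreover have "orth_sum (orth_sum_list \<phi> ms) \<mu> = orth_sum_list \<phi> (ms @ [\<mu>])"
      by (simp add: orth_sum_list_def)
    ultimately have "isometric S (orth_sum_list \<phi> (ms @ [\<mu>]))"
      using isometric_trans F(6) S by metis
    moreover have "\<forall>m\<in>set (ms @ [\<mu>]). is_ssqs m \<and> dim m = 1 \<and> metabolic m" using IH(3) F(3-5) by auto
    ultimately show ?thesis using IH(1,2) by blast
  qed
qed

theorem proposition2p4:
  assumes "CHAR('a::field) = 2"
  shows
    "\<forall>S :: 'a ssqs. is_ssqs S \<longrightarrow>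
       (\<exists>\<phi> ms. is_ssqs \<phi> \<and> anisotropic \<phi> \<and>
          (\<forall>m\<in>set ms. is_ssqs m \<and> dim m = 1 \<and> metabolic m) \<and>
          isometric S (orth_sum_list \<phi> ms)) \<and>
       (\<forall>\<phi>1 ms1 \<phi>2 ms2.
          is_ssqs \<phi>1 \<and> anisotropic \<phi>1 \<and>
          (\<forall>m\<in>set ms1. is_ssqs m \<and> dim m = 1 \<and> metabolic m) \<and>
          isometric S (orth_sum_list \<phi>1 ms1) \<and>
          is_ssqs \<phi>2 \<and> anisotropic \<phi>2 \<and>
          (\<forall>m\<in>set ms2. is_ssqs m \<and> dim m = 1 \<and> metabolic m) \<and>
          isometric S (orth_sum_list \<phi>2 ms2)
          \<longrightarrow> isometric \<phi>1 \<phi>2) \<and>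
       (metabolic S \<longrightarrow>
          (\<forall>\<phi> ms. is_ssqs \<phi> \<and> anisotropic \<phi> \<and>
             (\<forall>m\<in>set ms. is_ssqs m \<and> dim m = 1 \<and> metabolic m) \<and>
             isometric S (orth_sum_list \<phi> ms) \<longrightarrow> dim \<phi> = 0))"
proof (intro allI impI conjI)
  fix S :: "'a ssqs" assume S: "is_ssqs S"
  show "\<exists>\<phi> ms. is_ssqs \<phi> \<and> anisotropic \<phi> \<and>
          (\<forall>m\<in>set ms. is_ssqs m \<and> dim m = 1 \<and> metabolic m) \<and>
          isometric S (orth_sum_list \<phi> ms)" by (rule existence[OF S])
next
  fix S :: "'a ssqs" and \<phi>1 ms1 \<phi>2 ms2
  assume H: "is_ssqs \<phi>1 \<and> anisotropic \<phi>1 \<and>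
          (\<forall>m\<in>set ms1. is_ssqs m \<and> dim m = 1 \<and> metabolic m) \<and>
          isometric S (orth_sum_list \<phi>1 ms1) \<and>
          is_ssqs \<phi>2 \<and> anisotropic \<phi>2 \<and>
          (\<forall>m\<in>set ms2. is_ssqs m \<and> dim m = 1 \<and> metabolic m) \<and>
          isometric S (orth_sum_list \<phi>2 ms2)"
  obtain d1 p1 p1' where P1: "\<phi>1 = (d1, p1, p1')" by (cases \<phi>1) auto
  obtain d2 p2 p2' where P2: "\<phi>2 = (d2, p2, p2')" by (cases \<phi>2) auto
  obtain n1 q1 q1' where T1: "orth_sum_list \<phi>1 ms1 = (n1, q1, q1')" "decomp d1 p1 p1' n1 q1 q1'"
    using osl_struct[of d1 p1 p1' ms1] H P1 by blast
  obtain n2 q2 q2' where T2: "orth_sum_list \<phi>2 ms2 = (n2, q2, q2')" "decomp d2 p2 p2' n2 q2 q2'"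
    using osl_struct[of d2 p2 p2' ms2] H P2 by blast
  have "isometric (n1, q1, q1') (n2, q2, q2')"
    using isometric_trans[OF isometric_sym] H T1(1) T2(1) by metis
  then obtain \<psi> where "iso_map n1 q1 q1' n2 q2 q2' \<psi>" unfolding isometric_iff by blast
  then show "isometric \<phi>1 \<phi>2" unfolding P1 P2
    using core[OF assms T1(2) _ T2(2)] H P1 P2 by blast
next
  fix S :: "'a ssqs" and \<phi> ms
  assume S: "is_ssqs S" and M: "metabolic S"
    and H: "is_ssqs \<phi> \<and> anisotropic \<phi> \<and>
             (\<forall>m\<in>set ms. is_ssqs m \<and> dim m = 1 \<and> metabolic m) \<and>
             isometric S (orth_sum_list \<phi> ms)"
  obtain d p p' where P: "\<phi> = (d, p, p')" by (cases \<phi>) auto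
  obtain n q q' where SS: "S = (n, q, q')" by (cases S) auto
  obtain m r r' where T: "orth_sum_list \<phi> ms = (m, r, r')" "decomp d p p' m r r'"
    using osl_struct[of d p p' ms] H P by blast
  have "d = 0" using metab_dim0[of n q q' d p p' m r r'] M S H SS P T by simp
  then show "dim \<phi> = 0" using P by (simp add: dim_def)
qed

end
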